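(* Let $b(t)$ be the Brownian motion on the spider graph $Sp_N$ ($N\ge2$) with Kirchhoff gluing at the origin, started at the origin. Let $L_1,\dots,L_N>0$ and let $\tau(L_1,\dots,L_N)$ be the first time $b$ hits one of the points $\{x_i=L_i\}$, $i=1,\dots,N$ (the point at distance $L_i$ from the origin on leg $l_i$). Then for every $\lambda>0$, $$E_0e^{-\lambda\tau(L_1,\dots,L_N)}=\frac{\sum_{i=1}^N\frac{\sqrt{2\lambda}}{\sinh\sqrt{2\lambda}L_i}}{\sum_{i=1}^N\sqrt{2\lambda}\,\frac{\cosh\sqrt{2\lambda}L_i}{\sinh\sqrt{2\lambda}L_i}}.$$
   Context: The spider graph $Sp_N$ consists of $N$ half-lines (legs) $l_1,\dots,l_N$, each a copy of $[0,\infty)$ with coordinate $x_i\ge0$, glued at their common endpoint $0$. The Brownian motion $b(t)$ on $Sp_N$ is the continuous strong Markov process with generator $\frac12\frac{d^2}{dx_i^2}$ on each leg, acting on functions continuous on $Sp_N$, twice differentiable on each leg, and satisfying Kirchhoff's condition $\sum_{i=1}^N f_i'(0)=0$ ($f_i'(0)$ the one-sided derivative at $0$ along leg $l_i$). Equivalently, away from $0$ it is a standard one-dimensional Brownian motion along the leg and from $0$ it enters each leg with equal probability $1/N$. $E_0$ denotes expectation for the process started at the origin. *)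

theory Defs
  imports "HOL-Probability.Probability"
begin

text \<open>Points of the spider graph Sp_N are represented as pairs (i, x) with
  leg index i < N (legs l_1..l_N are indexed 0..N-1) and coordinate x \<ge> 0;
  all pairs (i, 0) represent the common origin.\<close>

definition sp_point :: "nat \<Rightarrow> nat \<times> real \<Rightarrow> bool" where
  "sp_point N p \<longleftrightarrow> fst p < N \<and> snd p \<ge> 0"

definition sp_dist :: "nat \<times> real \<Rightarrow> nat \<times> real \<Rightarrow> real" where
  "sp_dist p q = (if fst p = fst q then \<bar>snd p - snd q\<bar> else snd p + snd q)"

definition sp_continuous_path :: "(real \<Rightarrow> nat \<times> real) \<Rightarrow> bool" where
  "sp_continuous_path w \<longleftrightarrow>
     (\<forall>t\<ge>0. \<forall>e>0. \<exists>d>0. \<forall>s\<ge>0. \<bar>s - t\<bar> < d \<longrightarrow> sp_dist (w s) (w t) < e)"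

text \<open>Domain of the generator: f is given legwise (f i = restriction to leg i),
  f1, f2 are its first and second (one-sided at 0) derivatives along each leg.
  f is continuous on Sp_N (equal values at the origin), twice differentiable
  on each leg, the generator (1/2) f'' is continuous on Sp_N (equal values of
  f'' at the origin), Kirchhoff's condition holds, and f, f', f'' are bounded.\<close>
definition sp_gen_domain ::
  "nat \<Rightarrow> (nat \<Rightarrow> real \<Rightarrow> real) \<Rightarrow> (nat \<Rightarrow> real \<Rightarrow> real) \<Rightarrow> (nat \<Rightarrow> real \<Rightarrow> real) \<Rightarrow> bool" where
  "sp_gen_domain N f f1 f2 \<longleftrightarrow>
     (\<forall>i<N. f i 0 = f 0 0) \<and>
     (\<forall>i<N. \<forall>x\<ge>0. (f i has_real_derivative f1 i x) (at x within {0..}) \<and>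
                   (f1 i has_real_derivative f2 i x) (at x within {0..})) \<and>
     (\<forall>i<N. continuous_on {0..} (f2 i)) \<and>
     (\<forall>i<N. f2 i 0 = f2 0 0) \<and>
     (\<Sum>i<N. f1 i 0) = 0 \<and>
     (\<exists>B. \<forall>i<N. \<forall>x\<ge>0. \<bar>f i x\<bar> \<le> B \<and> \<bar>f1 i x\<bar> \<le> B \<and> \<bar>f2 i x\<bar> \<le> B)"

text \<open>Martingale w.r.t. filtration F under M (continuous time, t \<ge> 0),
  written out via the defining property of conditional expectation.\<close>
definition is_martingale ::
  "'a measure \<Rightarrow> (real \<Rightarrow> 'a measure) \<Rightarrow> (real \<Rightarrow> 'a \<Rightarrow> real) \<Rightarrow> bool" where
  "is_martingale M F Y \<longleftrightarrow>
     (\<forall>t\<ge>0. Y t \<in> borel_measurable (F t) \<and> integrable M (Y t)) \<and>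
     (\<forall>s t A. 0 \<le> s \<longrightarrow> s \<le> t \<longrightarrow> A \<in> sets (F s) \<longrightarrow>
        (\<integral>\<omega>. indicator A \<omega> * Y t \<omega> \<partial>M) = (\<integral>\<omega>. indicator A \<omega> * Y s \<omega> \<partial>M))"

text \<open>Brownian motion on Sp_N started at the origin, as the continuous
  solution of the martingale problem for the generator (1/2) d^2/dx_i^2 with
  Kirchhoff gluing (Freidlin-Wentzell characterisation).\<close>
definition spider_BM ::
  "nat \<Rightarrow> 'a measure \<Rightarrow> (real \<Rightarrow> 'a measure) \<Rightarrow> (real \<Rightarrow> 'a \<Rightarrow> nat \<times> real) \<Rightarrow> bool" where
  "spider_BM N M F X \<longleftrightarrow>
     prob_space M \<and>
     filtration (space M) F \<and> (\<forall>t. sets (F t) \<subseteq> sets M) \<and>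
     (\<forall>t\<ge>0. X t \<in> measurable (F t) (count_space UNIV \<Otimes>\<^sub>M borel)) \<and>
     (\<forall>\<omega>\<in>space M. \<forall>t\<ge>0. sp_point N (X t \<omega>)) \<and>
     (\<forall>\<omega>\<in>space M. snd (X 0 \<omega>) = 0) \<and>
     (\<forall>\<omega>\<in>space M. sp_continuous_path (\<lambda>t. X t \<omega>)) \<and>
     (\<forall>f f1 f2. sp_gen_domain N f f1 f2 \<longrightarrow>
        is_martingale M F (\<lambda>t \<omega>. f (fst (X t \<omega>)) (snd (X t \<omega>)) - f (fst (X 0 \<omega>)) (snd (X 0 \<omega>))
           - integral {0..t} (\<lambda>r. f2 (fst (X r \<omega>)) (snd (X r \<omega>)) / 2)))"

definition hit_set :: "nat \<Rightarrow> (nat \<Rightarrow> real) \<Rightarrow> (real \<Rightarrow> 'a \<Rightarrow> nat \<times> real) \<Rightarrow> 'a \<Rightarrow> real set" where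
  "hit_set N L X \<omega> = {t. t \<ge> 0 \<and> (\<exists>i<N. X t \<omega> = (i, L i))}"

definition hit_time :: "nat \<Rightarrow> (nat \<Rightarrow> real) \<Rightarrow> (real \<Rightarrow> 'a \<Rightarrow> nat \<times> real) \<Rightarrow> 'a \<Rightarrow> real" where
  "hit_time N L X \<omega> = Inf (hit_set N L X \<omega>)"

text \<open>exp(-lam * tau), with the convention exp(-lam * \<infinity>) = 0 if the set is never hit.\<close>
definition exp_hit :: "real \<Rightarrow> nat \<Rightarrow> (nat \<Rightarrow> real) \<Rightarrow> (real \<Rightarrow> 'a \<Rightarrow> nat \<times> real) \<Rightarrow> 'a \<Rightarrow> real" where
  "exp_hit lam N L X \<omega> =
     (if hit_set N L X \<omega> = {} then 0 else exp (- lam * hit_time N L X \<omega>))"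

end

theory Submission
  imports Defs
begin

definition yc :: "nat \<Rightarrow> (real \<Rightarrow> nat \<times> real) \<Rightarrow> real \<Rightarrow> real" where
  "yc i w t = (if fst (w t) = i then snd (w t) else 0)"

lemma yc_nonneg: "sp_point N (w t) \<Longrightarrow> yc i w t \<ge> 0"
  by (auto simp: yc_def sp_point_def)

lemma yc_lip:
  assumes "sp_point N (w s)" "sp_point N (w t)"
  shows "\<bar>yc i w s - yc i w t\<bar> \<le> sp_dist (w s) (w t)"
  using assms by (auto simp: yc_def sp_point_def sp_dist_def)

lemma yc_cont:
  assumes "sp_continuous_path w" "\<forall>t\<ge>0. sp_point N (w t)"
  shows "continuous_on {0..} (yc i w)"
  unfolding continuous_on_iff
proof (intro ballI allI impI)
  fix t e :: real assume t: "t \<in> {0..}" and e: "e > 0"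
  then obtain d where d: "d > 0" "\<forall>s\<ge>0. \<bar>s - t\<bar> < d \<longrightarrow> sp_dist (w s) (w t) < e"
    using assms(1) t e unfolding sp_continuous_path_def by (meson atLeast_iff)
  show "\<exists>d>0. \<forall>x'\<in>{0..}. dist x' t < d \<longrightarrow> dist (yc i w x') (yc i w t) < e"
  proof (intro exI[of _ d] conjI ballI impI)
    fix s assume "s \<in> {0::real..}" "dist s t < d"
    then have "sp_dist (w s) (w t) < e" using d by (auto simp: dist_real_def)
    moreover have "\<bar>yc i w s - yc i w t\<bar> \<le> sp_dist (w s) (w t)"
      using yc_lip[of N w s t i] assms(2) t \<open>s \<in> _\<close> by auto
    ultimately show "dist (yc i w s) (yc i w t) < e" by (simp add: dist_real_def)
  qed (use d in auto)
qed

lemma path_fun_sum: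
  fixes g :: "nat \<Rightarrow> real \<Rightarrow> real"
  assumes "sp_point N (w t)" "\<forall>i<N. g i 0 = g 0 0"
  shows "g (fst (w t)) (snd (w t)) = g 0 0 + (\<Sum>i<N. g i (yc i w t) - g i 0)"
proof -
  define j where "j = fst (w t)"
  have j: "j < N" using assms(1) by (simp add: sp_point_def j_def)
  have 1: "(\<Sum>i<N. g i (yc i w t) - g i 0) = g j (yc j w t) - g j 0 + (\<Sum>i\<in>{..<N}-{j}. g i (yc i w t) - g i 0)"
    using j by (intro sum.remove) auto
  have 2: "(\<Sum>i\<in>{..<N}-{j}. g i (yc i w t) - g i 0) = 0"
    by (intro sum.neutral) (auto simp: yc_def j_def split: if_splits)
  have 3: "g j 0 = g 0 0" using j assms(2) by blast
  have 4: "yc j w t = snd (w t)" by (simp add: yc_def j_def)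
  show ?thesis unfolding 1 2 3 4 by (simp add: j_def)
qed

lemma path_fun_cont:
  fixes g :: "nat \<Rightarrow> real \<Rightarrow> real"
  assumes "sp_continuous_path w" "\<forall>t\<ge>0. sp_point N (w t)" "\<forall>i<N. g i 0 = g 0 0"
    "\<forall>i<N. continuous_on {0..} (g i)"
  shows "continuous_on {0..} (\<lambda>t. g (fst (w t)) (snd (w t)))"
proof -
  have "continuous_on {0..} (\<lambda>t. g 0 0 + (\<Sum>i<N. g i (yc i w t) - g i 0))"
  proof (intro continuous_on_add continuous_on_const continuous_on_sum continuous_on_diff)
    fix i assume "i \<in> {..<N}"
    then have "continuous_on {0..} (g i)" using assms(4) by simp
    moreover have "yc i w ` {0..} \<subseteq> {0..}" using yc_nonneg assms(2) by (metis atLeast_iff image_subset_iff)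
    ultimately show "continuous_on {0..} (\<lambda>t. g i (yc i w t))"
      using yc_cont[OF assms(1,2), of i] by (metis continuous_on_compose2)
  qed
  moreover have "continuous_on {0..} (\<lambda>t. g (fst (w t)) (snd (w t))) = continuous_on {0..} (\<lambda>t. g 0 0 + (\<Sum>i<N. g i (yc i w t) - g i 0))"
  proof (rule continuous_on_cong[OF refl])
    fix t :: real assume "t \<in> {0..}"
    then have "sp_point N (w t)" using assms(2) by simp
    then show "g (fst (w t)) (snd (w t)) = g 0 0 + (\<Sum>i<N. g i (yc i w t) - g i 0)"
      by (rule path_fun_sum[of N w t g, OF _ assms(3)])
  qed
  ultimately show ?thesis by simp
qed

definition gv :: "real \<Rightarrow> real \<Rightarrow> real \<Rightarrow> real \<Rightarrow> real" where
  "gv a b k x = a * cosh (k*x) + b * sinh (k*x)"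
definition gd :: "real \<Rightarrow> real \<Rightarrow> real \<Rightarrow> real \<Rightarrow> real" where
  "gd a b k x = k * (a * sinh (k*x) + b * cosh (k*x))"
definition gc2 :: "real \<Rightarrow> real \<Rightarrow> real \<Rightarrow> real \<Rightarrow> real" where
  "gc2 a b k L = (gd a b k L + k^2 * gv a b k L) / 2"
definition gc1 :: "real \<Rightarrow> real \<Rightarrow> real \<Rightarrow> real \<Rightarrow> real" where
  "gc1 a b k L = - (k^2 * gv a b k L) - 2 * gd a b k L"
definition gc0 :: "real \<Rightarrow> real \<Rightarrow> real \<Rightarrow> real \<Rightarrow> real" where
  "gc0 a b k L = gv a b k L - gc1 a b k L - gc2 a b k L"

definition glue0 :: "real \<Rightarrow> real \<Rightarrow> real \<Rightarrow> real \<Rightarrow> real \<Rightarrow> real" where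
  "glue0 a b k L x = (if x \<le> L then gv a b k x else
     gc0 a b k L + gc1 a b k L * exp (-(x-L)) + gc2 a b k L * exp (-2*(x-L)))"
definition glue1 :: "real \<Rightarrow> real \<Rightarrow> real \<Rightarrow> real \<Rightarrow> real \<Rightarrow> real" where
  "glue1 a b k L x = (if x \<le> L then gd a b k x else
     - gc1 a b k L * exp (-(x-L)) - 2 * gc2 a b k L * exp (-2*(x-L)))"
definition glue2 :: "real \<Rightarrow> real \<Rightarrow> real \<Rightarrow> real \<Rightarrow> real \<Rightarrow> real" where
  "glue2 a b k L x = (if x \<le> L then k^2 * gv a b k x else
     gc1 a b k L * exp (-(x-L)) + 4 * gc2 a b k L * exp (-2*(x-L)))"

lemma glue_deriv_gen:
  fixes f g f' g' :: "real \<Rightarrow> real"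
  assumes "\<And>x. (f has_real_derivative f' x) (at x)" "\<And>x. (g has_real_derivative g' x) (at x)"
    "f L = g L" "f' L = g' L"
  shows "((\<lambda>x. if x \<le> L then f x else g x) has_real_derivative (if x \<le> L then f' x else g' x)) (at x)"
proof -
  have "((\<lambda>x. if x \<in> {..L} then f x else g x) has_vector_derivative (if x \<in> {..L} then f' x else g' x)) (at x within UNIV)"
    by (rule has_vector_derivative_If_within_closures[where T="{L<..}"])
       (use assms in \<open>auto simp: has_real_derivative_iff_has_vector_derivative[symmetric] intro: has_field_derivative_at_within\<close>)
  then show ?thesis by (simp add: has_real_derivative_iff_has_vector_derivative)
qed

lemma gv_deriv: "(gv a b k has_real_derivative gd a b k x) (at x)"
  unfolding gv_def gd_def
  by (auto intro!: derivative_eq_intros simp: algebra_simps)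

lemma gd_deriv: "(gd a b k has_real_derivative k^2 * gv a b k x) (at x)"
  unfolding gv_def gd_def
  by (auto intro!: derivative_eq_intros simp: algebra_simps power2_eq_square)

lemma glue0_deriv: "(glue0 a b k L has_real_derivative glue1 a b k L x) (at x)"
proof -
  have "((\<lambda>x. if x \<le> L then gv a b k x else
     gc0 a b k L + gc1 a b k L * exp (-(x-L)) + gc2 a b k L * exp (-2*(x-L))) has_real_derivative
     (if x \<le> L then gd a b k x else - gc1 a b k L * exp (-(x-L)) - 2 * gc2 a b k L * exp (-2*(x-L)))) (at x)"
    by (rule glue_deriv_gen[OF gv_deriv])
       (auto intro!: derivative_eq_intros simp: gc0_def gc1_def gc2_def field_simps)
  then show ?thesis unfolding glue0_def[abs_def] glue1_def .
qed

lemma glue1_deriv: "(glue1 a b k L has_real_derivative glue2 a b k L x) (at x)"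
proof -
  have "((\<lambda>x. if x \<le> L then gd a b k x else
     - gc1 a b k L * exp (-(x-L)) - 2 * gc2 a b k L * exp (-2*(x-L))) has_real_derivative
     (if x \<le> L then k^2 * gv a b k x else gc1 a b k L * exp (-(x-L)) + 4 * gc2 a b k L * exp (-2*(x-L)))) (at x)"
    by (rule glue_deriv_gen[OF gd_deriv])
       (auto intro!: derivative_eq_intros simp: gc0_def gc1_def gc2_def field_simps)
  then show ?thesis unfolding glue1_def[abs_def] glue2_def .
qed

lemma glue2_cont: "continuous_on UNIV (glue2 a b k L)"
proof -
  have "continuous_on ({..L} \<union> {L..}) (\<lambda>x. if x \<le> L then k^2 * gv a b k x else
     gc1 a b k L * exp (-(x-L)) + 4 * gc2 a b k L * exp (-2*(x-L)))"
    by (rule continuous_on_cases)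
       (auto simp: gv_def gc1_def gc2_def field_simps intro!: continuous_intros)
  moreover have "{..L} \<union> {L..} = UNIV" by auto
  ultimately show ?thesis unfolding glue2_def[abs_def] by simp
qed

lemma tail_bounded:
  fixes p :: "real \<Rightarrow> real"
  assumes "continuous_on {0..L} p" "0 \<le> L"
  shows "\<exists>B. \<forall>x\<ge>0. \<bar>(if x \<le> L then p x else c0 + c1 * exp (-(x-L)) + c2 * exp (-2*(x-L)))\<bar> \<le> B"
proof -
  have "compact (p ` {0..L})" by (rule compact_continuous_image[OF assms(1) compact_Icc])
  then obtain B1 where B1: "\<And>y. y \<in> p ` {0..L} \<Longrightarrow> \<bar>y\<bar> \<le> B1"
    using compact_imp_bounded bounded_real by metis
  show ?thesis
  proof (intro exI[of _ "B1 + \<bar>c0\<bar> + \<bar>c1\<bar> + \<bar>c2\<bar>"] allI impI)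
    fix x :: real assume x: "x \<ge> 0"
    show "\<bar>(if x \<le> L then p x else c0 + c1 * exp (-(x-L)) + c2 * exp (-2*(x-L)))\<bar> \<le> B1 + \<bar>c0\<bar> + \<bar>c1\<bar> + \<bar>c2\<bar>"
    proof (cases "x \<le> L")
      case True
      then have "\<bar>p x\<bar> \<le> B1" using B1 x by auto
      moreover have "0 \<le> B1" using B1[of "p 0"] True x by auto
      ultimately show ?thesis using True by simp
    next
      case False
      have e1: "exp (-(x-L)) \<le> 1" "exp (-2*(x-L)) \<le> 1" using False by auto
      have "\<bar>c1 * exp (-(x-L))\<bar> \<le> \<bar>c1\<bar>" using e1 by (simp add: abs_mult mult_left_le)
      moreover have "\<bar>c2 * exp (-2*(x-L))\<bar> \<le> \<bar>c2\<bar>" using e1 by (simp add: abs_mult mult_left_le)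
      moreover have "p 0 \<in> p ` {0..L}" using assms(2) by auto
      then have "0 \<le> B1" using B1[of "p 0"] by linarith
      ultimately show ?thesis using False by (simp add: abs_triangle_ineq order_trans[OF abs_triangle_ineq])
    qed
  qed
qed

definition tfa :: "nat \<Rightarrow> (nat \<Rightarrow> real) \<Rightarrow> real \<Rightarrow> real" where
  "tfa N L k = (\<Sum>i<N. 1 / sinh (k * L i)) / (\<Sum>i<N. cosh (k * L i) / sinh (k * L i))"
definition tfb :: "nat \<Rightarrow> (nat \<Rightarrow> real) \<Rightarrow> real \<Rightarrow> nat \<Rightarrow> real" where
  "tfb N L k i = (1 - tfa N L k * cosh (k * L i)) / sinh (k * L i)"
definition tf0 :: "nat \<Rightarrow> (nat \<Rightarrow> real) \<Rightarrow> real \<Rightarrow> nat \<Rightarrow> real \<Rightarrow> real" where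
  "tf0 N L k i = glue0 (tfa N L k) (tfb N L k i) k (L i)"
definition tf1 :: "nat \<Rightarrow> (nat \<Rightarrow> real) \<Rightarrow> real \<Rightarrow> nat \<Rightarrow> real \<Rightarrow> real" where
  "tf1 N L k i = glue1 (tfa N L k) (tfb N L k i) k (L i)"
definition tf2 :: "nat \<Rightarrow> (nat \<Rightarrow> real) \<Rightarrow> real \<Rightarrow> nat \<Rightarrow> real \<Rightarrow> real" where
  "tf2 N L k i = glue2 (tfa N L k) (tfb N L k i) k (L i)"

lemma tf_sum_b:
  assumes "N \<ge> 1" "\<forall>i<N. L i > 0" "k > 0"
  shows "(\<Sum>i<N. tfb N L k i) = 0"
proof -
  have pos: "sinh (k * L i) > 0" if "i < N" for i using assms that by simp
  have S2: "(\<Sum>i<N. cosh (k * L i) / sinh (k * L i)) > 0"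
  proof (rule sum_pos)
    have "0 \<in> {..<N}" using assms(1) by simp
    then show "{..<N} \<noteq> {}" by blast
  qed (use pos in auto)
  have "(\<Sum>i<N. tfb N L k i) = (\<Sum>i<N. 1 / sinh (k * L i)) - tfa N L k * (\<Sum>i<N. cosh (k * L i) / sinh (k * L i))"
    unfolding tfb_def by (simp add: diff_divide_distrib sum_subtractf sum_distrib_left)
  also have "\<dots> = 0" using S2 unfolding tfa_def by simp
  finally show ?thesis .
qed

lemma tf_domain:
  assumes "N \<ge> 1" "\<forall>i<N. L i > 0" "k > 0"
  shows "sp_gen_domain N (tf0 N L k) (tf1 N L k) (tf2 N L k)"
  unfolding sp_gen_domain_def
proof (intro conjI)
  have L0: "L 0 > 0" using assms by simp
  show "\<forall>i<N. tf0 N L k i 0 = tf0 N L k 0 0"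
  proof (intro allI impI)
    fix i assume "i < N" then have "L i > 0" using assms by simp
    then show "tf0 N L k i 0 = tf0 N L k 0 0" using L0 by (simp add: tf0_def glue0_def gv_def)
  qed
  show "\<forall>i<N. \<forall>x\<ge>0. (tf0 N L k i has_real_derivative tf1 N L k i x) (at x within {0..}) \<and>
      (tf1 N L k i has_real_derivative tf2 N L k i x) (at x within {0..})"
    unfolding tf0_def tf1_def tf2_def
    by (intro allI impI conjI; rule has_field_derivative_at_within; rule glue0_deriv glue1_deriv)
  show "\<forall>i<N. continuous_on {0..} (tf2 N L k i)"
    unfolding tf2_def by (meson continuous_on_subset glue2_cont subset_UNIV)
  show "\<forall>i<N. tf2 N L k i 0 = tf2 N L k 0 0"
  proof (intro allI impI)
    fix i assume "i < N" then have "L i > 0" using assms by simp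
    then show "tf2 N L k i 0 = tf2 N L k 0 0" using L0 by (simp add: tf2_def glue2_def gv_def)
  qed
  have "(\<Sum>i<N. tf1 N L k i 0) = (\<Sum>i<N. k * tfb N L k i)"
    by (rule sum.cong) (use assms in \<open>auto simp: tf1_def glue1_def gd_def\<close>)
  also have "\<dots> = 0" using tf_sum_b[OF assms] by (simp add: sum_distrib_left[symmetric])
  finally show "(\<Sum>i<N. tf1 N L k i 0) = 0" .
  have "\<forall>i<N. \<exists>B. \<forall>x\<ge>0. \<bar>tf0 N L k i x\<bar> \<le> B \<and> \<bar>tf1 N L k i x\<bar> \<le> B \<and> \<bar>tf2 N L k i x\<bar> \<le> B"
  proof (intro allI impI)
    fix i assume i: "i < N"
    have Li: "0 \<le> L i" using assms i by force
    define a where "a = tfa N L k"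
    define b where "b = tfb N L k i"
    have c0: "continuous_on {0..L i} (gv a b k)" unfolding gv_def by (intro continuous_intros)
    have c1: "continuous_on {0..L i} (gd a b k)" unfolding gd_def by (intro continuous_intros)
    have c2: "continuous_on {0..L i} (\<lambda>x. k^2 * gv a b k x)" unfolding gv_def by (intro continuous_intros)
    have "\<exists>B. \<forall>x\<ge>0. \<bar>tf0 N L k i x\<bar> \<le> B"
      using tail_bounded[OF c0 Li, of "gc0 a b k (L i)" "gc1 a b k (L i)" "gc2 a b k (L i)"]
      by (simp only: tf0_def glue0_def a_def[symmetric] b_def[symmetric])
    then obtain B0 where B0: "\<forall>x\<ge>0. \<bar>tf0 N L k i x\<bar> \<le> B0" by blast
    have eq1: "tf1 N L k i x = (if x \<le> L i then gd a b k x else 0 + (- gc1 a b k (L i)) * exp (-(x - L i)) + (- 2 * gc2 a b k (L i)) * exp (-2*(x - L i)))" for x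
      by (simp add: tf1_def glue1_def a_def b_def)
    have "\<exists>B. \<forall>x\<ge>0. \<bar>tf1 N L k i x\<bar> \<le> B"
      using tail_bounded[OF c1 Li, of 0 "- gc1 a b k (L i)" "- 2 * gc2 a b k (L i)"]
      unfolding eq1 .
    then obtain B1 where B1: "\<forall>x\<ge>0. \<bar>tf1 N L k i x\<bar> \<le> B1" by blast
    have eq2: "tf2 N L k i x = (if x \<le> L i then k^2 * gv a b k x else 0 + gc1 a b k (L i) * exp (-(x - L i)) + (4 * gc2 a b k (L i)) * exp (-2*(x - L i)))" for x
      by (simp add: tf2_def glue2_def a_def b_def)
    have "\<exists>B. \<forall>x\<ge>0. \<bar>tf2 N L k i x\<bar> \<le> B"
      using tail_bounded[OF c2 Li, of 0 "gc1 a b k (L i)" "4 * gc2 a b k (L i)"]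
      unfolding eq2 .
    then obtain B2 where B2: "\<forall>x\<ge>0. \<bar>tf2 N L k i x\<bar> \<le> B2" by blast
    show "\<exists>B. \<forall>x\<ge>0. \<bar>tf0 N L k i x\<bar> \<le> B \<and> \<bar>tf1 N L k i x\<bar> \<le> B \<and> \<bar>tf2 N L k i x\<bar> \<le> B"
      using B0 B1 B2 by (intro exI[of _ "max B0 (max B1 B2)"]) (auto simp: le_max_iff_disj)
  qed
  then have "\<exists>Bf. \<forall>i<N. \<forall>x\<ge>0. \<bar>tf0 N L k i x\<bar> \<le> Bf i \<and> \<bar>tf1 N L k i x\<bar> \<le> Bf i \<and> \<bar>tf2 N L k i x\<bar> \<le> Bf i"
    by (subst (asm) choice_iff') assumption
  then obtain Bf where Bf: "\<forall>i<N. \<forall>x\<ge>0. \<bar>tf0 N L k i x\<bar> \<le> Bf i \<and> \<bar>tf1 N L k i x\<bar> \<le> Bf i \<and> \<bar>tf2 N L k i x\<bar> \<le> Bf i"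
    by blast
  have le: "Bf i \<le> (\<Sum>j<N. \<bar>Bf j\<bar>)" if "i < N" for i
  proof -
    have "Bf i \<le> \<bar>Bf i\<bar>" by simp
    also have "\<dots> \<le> (\<Sum>j<N. \<bar>Bf j\<bar>)" using that by (intro member_le_sum) auto
    finally show ?thesis .
  qed
  show "\<exists>B. \<forall>i<N. \<forall>x\<ge>0. \<bar>tf0 N L k i x\<bar> \<le> B \<and> \<bar>tf1 N L k i x\<bar> \<le> B \<and> \<bar>tf2 N L k i x\<bar> \<le> B"
  proof (intro exI[of _ "\<Sum>j<N. \<bar>Bf j\<bar>"] allI impI)
    fix i x assume i: "i < N" and x: "(0::real) \<le> x"
    have "\<bar>tf0 N L k i x\<bar> \<le> Bf i" "\<bar>tf1 N L k i x\<bar> \<le> Bf i" "\<bar>tf2 N L k i x\<bar> \<le> Bf i"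
      using Bf i x by auto
    then show "\<bar>tf0 N L k i x\<bar> \<le> (\<Sum>j<N. \<bar>Bf j\<bar>) \<and> \<bar>tf1 N L k i x\<bar> \<le> (\<Sum>j<N. \<bar>Bf j\<bar>) \<and> \<bar>tf2 N L k i x\<bar> \<le> (\<Sum>j<N. \<bar>Bf j\<bar>)"
      using le[OF i] by linarith
  qed
qed

lemma tf_at_L:
  assumes "L i > 0" "k > 0"
  shows "tf0 N L k i (L i) = 1"
  using assms by (simp add: tf0_def glue0_def gv_def tfb_def)

lemma tf_eq:
  assumes "0 \<le> x" "x \<le> L i"
  shows "tf2 N L k i x = k^2 * tf0 N L k i x"
  using assms by (simp add: tf0_def tf2_def glue0_def glue2_def)

lemma tf_origin: "L i \<ge> 0 \<Longrightarrow> tf0 N L k i 0 = tfa N L k"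
  by (simp add: tf0_def glue0_def gv_def)

definition qg :: "real \<Rightarrow> real \<Rightarrow> nat \<Rightarrow> int \<Rightarrow> real" where
  "qg a b n j = max a (min b (a + real_of_int j / real (Suc n)))"

lemma qg_conv:
  assumes "a \<le> r" "r \<le> b"
  shows "(\<lambda>n. qg a b n \<lceil>(r - a) * real (Suc n)\<rceil>) \<longlonglongrightarrow> r"
    and "qg a b n j \<in> {a..b}"
proof -
  have lo: "r \<le> qg a b n \<lceil>(r - a) * real (Suc n)\<rceil>" for n
  proof -
    have s: "real (Suc n) > 0" by simp
    have "(r - a) * real (Suc n) \<le> real_of_int \<lceil>(r - a) * real (Suc n)\<rceil>" by linarith
    then have "r - a \<le> real_of_int \<lceil>(r - a) * real (Suc n)\<rceil> / real (Suc n)"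
      unfolding pos_le_divide_eq[OF s] .
    then show ?thesis using assms unfolding qg_def by linarith
  qed
  have hi: "qg a b n \<lceil>(r - a) * real (Suc n)\<rceil> \<le> r + inverse (real (Suc n))" for n
  proof -
    have s: "real (Suc n) > 0" by simp
    have "real_of_int \<lceil>(r - a) * real (Suc n)\<rceil> \<le> (r - a) * real (Suc n) + 1" by linarith
    moreover have "(r - a + inverse (real (Suc n))) * real (Suc n) = (r - a) * real (Suc n) + 1"
      using s by (simp add: distrib_right)
    ultimately have "real_of_int \<lceil>(r - a) * real (Suc n)\<rceil> / real (Suc n) \<le> r - a + inverse (real (Suc n))"
      unfolding pos_divide_le_eq[OF s] by simp
    moreover have ip: "0 < inverse (real (Suc n))" by simp
    ultimately have "min b (a + real_of_int \<lceil>(r - a) * real (Suc n)\<rceil> / real (Suc n)) \<le> r + inverse (real (Suc n))"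
      by (intro order_trans[OF min.cobounded2]) linarith
    moreover have "a \<le> r + inverse (real (Suc n))" using ip assms by linarith
    ultimately show ?thesis unfolding qg_def by (rule max.boundedI[rotated])
  qed
  have "(\<lambda>n. r + inverse (real (Suc n))) \<longlonglongrightarrow> r + 0"
    by (intro tendsto_add tendsto_const LIMSEQ_inverse_real_of_nat)
  show "(\<lambda>n. qg a b n \<lceil>(r - a) * real (Suc n)\<rceil>) \<longlonglongrightarrow> r"
  proof (rule tendsto_sandwich[of "\<lambda>n. r" _ sequentially "\<lambda>n. r + inverse (real (Suc n))"])
    show "\<forall>\<^sub>F n in sequentially. r \<le> qg a b n \<lceil>(r - a) * real (Suc n)\<rceil>"
      by (intro always_eventually allI lo)
    show "\<forall>\<^sub>F n in sequentially. qg a b n \<lceil>(r - a) * real (Suc n)\<rceil> \<le> r + inverse (real (Suc n))"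
      by (intro always_eventually allI hi)
  qed (use \<open>(\<lambda>n. r + inverse (real (Suc n))) \<longlonglongrightarrow> r + 0\<close> in simp_all)
  show "qg a b n j \<in> {a..b}" using assms unfolding qg_def by auto
qed

lemma joint_meas:
  fixes Y :: "real \<Rightarrow> 'a \<Rightarrow> real"
  assumes ab: "a \<le> b"
    and meas: "\<And>r. r \<in> {a..b} \<Longrightarrow> Y r \<in> borel_measurable M"
    and cont: "\<And>\<omega>. \<omega> \<in> space M \<Longrightarrow> continuous_on {a..b} (\<lambda>r. Y r \<omega>)"
  shows "(\<lambda>z. Y (fst z) (snd z)) \<in> borel_measurable (restrict_space lborel {a..b} \<Otimes>\<^sub>M M)"
proof (rule borel_measurable_LIMSEQ_real)
  let ?T = "restrict_space lborel {a..b}"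
  fix n
  show "(\<lambda>z. Y (qg a b n \<lceil>(fst z - a) * real (Suc n)\<rceil>) (snd z)) \<in> borel_measurable (?T \<Otimes>\<^sub>M M)"
  proof (rule measurable_compose_countable'[where I=UNIV and f="\<lambda>j z. Y (qg a b n j) (snd z)"])
    fix j :: int
    show "(\<lambda>z. Y (qg a b n j) (snd z)) \<in> borel_measurable (?T \<Otimes>\<^sub>M M)"
      using meas[of "qg a b n j"] qg_conv(2)[OF ab order_refl] by measurable
  next
    have "(\<lambda>z. fst z) \<in> borel_measurable (?T \<Otimes>\<^sub>M M)"
      by (rule measurable_compose[OF measurable_fst]) (simp add: measurable_restrict_space1)
    then show "(\<lambda>z. \<lceil>(fst z - a) * real (Suc n)\<rceil>) \<in> measurable (?T \<Otimes>\<^sub>M M) (count_space UNIV)"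
      by measurable
  qed simp
next
  fix z assume "z \<in> space (restrict_space lborel {a..b} \<Otimes>\<^sub>M M)"
  then have z: "fst z \<in> {a..b}" "snd z \<in> space M" by (auto simp: space_pair_measure)
  show "(\<lambda>n. Y (qg a b n \<lceil>(fst z - a) * real (Suc n)\<rceil>) (snd z)) \<longlonglongrightarrow> Y (fst z) (snd z)"
    using qg_conv[of a "fst z" b] z(1)
    by (intro continuous_on_tendsto_compose[OF cont[OF z(2)], where g="\<lambda>n. qg a b n \<lceil>(fst z - a) * real (Suc n)\<rceil>"]) auto
qed

lemma fubini_interval:
  fixes Y :: "real \<Rightarrow> 'a \<Rightarrow> real"
  assumes P: "prob_space M" and ab: "a \<le> b"
    and meas: "\<And>r. r \<in> {a..b} \<Longrightarrow> Y r \<in> borel_measurable M"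
    and cont: "\<And>\<omega>. \<omega> \<in> space M \<Longrightarrow> continuous_on {a..b} (\<lambda>r. Y r \<omega>)"
    and bnd: "\<And>r \<omega>. r \<in> {a..b} \<Longrightarrow> \<omega> \<in> space M \<Longrightarrow> \<bar>Y r \<omega>\<bar> \<le> C"
  shows "(\<lambda>\<omega>. integral {a..b} (\<lambda>r. Y r \<omega>)) \<in> borel_measurable M"
    and "(\<integral>\<omega>. integral {a..b} (\<lambda>r. Y r \<omega>) \<partial>M) = integral {a..b} (\<lambda>r. \<integral>\<omega>. Y r \<omega> \<partial>M)"
proof -
  define T where "T = restrict_space lborel {a..b}"
  have spT: "space T = {a..b}" by (simp add: T_def)
  have "emeasure T (space T) = ennreal (b - a)"
    unfolding spT unfolding T_def using ab by (subst emeasure_restrict_space) auto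
  then have finT: "finite_measure T" by (intro finite_measureI) simp
  interpret Mp: prob_space M by (rule P)
  interpret T: finite_measure T by (rule finT)
  interpret pair_sigma_finite T M ..
  have G: "(\<lambda>z. Y (fst z) (snd z)) \<in> borel_measurable (T \<Otimes>\<^sub>M M)"
    unfolding T_def by (rule joint_meas[OF ab meas cont])
  have finP: "finite_measure (T \<Otimes>\<^sub>M M)"
    by (rule finite_measure_pair_measure) (simp_all add: finT Mp.finite_measure_axioms)
  have intG: "integrable (T \<Otimes>\<^sub>M M) (\<lambda>z. Y (fst z) (snd z))"
  proof (rule finite_measure.integrable_const_bound[OF finP, where B=C])
    show "AE z in T \<Otimes>\<^sub>M M. norm (Y (fst z) (snd z)) \<le> C"
      by (rule AE_I2) (auto simp: space_pair_measure spT intro: bnd)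
  qed (rule G)
  have H: "(\<lambda>(\<omega>, r). Y r \<omega>) \<in> borel_measurable (M \<Otimes>\<^sub>M T)"
    using G by (subst measurable_pair_swap_iff) (simp add: case_prod_beta)
  have inner: "(\<integral>r. Y r \<omega> \<partial>T) = integral {a..b} (\<lambda>r. Y r \<omega>)" if "\<omega> \<in> space M" for \<omega>
  proof -
    have si: "set_integrable lborel {a..b} (\<lambda>r. Y r \<omega>)"
      unfolding set_integrable_def by (rule borel_integrable_compact[OF compact_Icc cont[OF that]])
    have "(\<integral>r. Y r \<omega> \<partial>T) = (LINT r:{a..b}|lborel. Y r \<omega>)"
      unfolding T_def set_lebesgue_integral_def by (rule integral_restrict_space) simp
    also have "\<dots> = integral {a..b} (\<lambda>r. Y r \<omega>)" by (rule set_borel_integral_eq_integral(2)[OF si])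
    finally show ?thesis .
  qed
  have m1: "(\<lambda>\<omega>. \<integral>r. Y r \<omega> \<partial>T) \<in> borel_measurable M"
    using T.borel_measurable_lebesgue_integral[of "\<lambda>\<omega> r. Y r \<omega>" M] H by simp
  show "(\<lambda>\<omega>. integral {a..b} (\<lambda>r. Y r \<omega>)) \<in> borel_measurable M"
    using m1 by (rule measurable_cong[THEN iffD1, rotated]) (simp add: inner)
  have "(\<integral>\<omega>. integral {a..b} (\<lambda>r. Y r \<omega>) \<partial>M) = (\<integral>\<omega>. (\<integral>r. Y r \<omega> \<partial>T) \<partial>M)"
    by (rule Bochner_Integration.integral_cong) (simp_all add: inner)
  also have "\<dots> = (\<integral>r. (\<integral>\<omega>. Y r \<omega> \<partial>M) \<partial>T)"
  proof (rule Fubini_integral)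
    have "(\<lambda>(x, y). Y x y) = (\<lambda>z. Y (fst z) (snd z))" by (simp add: fun_eq_iff)
    then show "integrable (T \<Otimes>\<^sub>M M) (\<lambda>(x, y). Y x y)" using intG by simp
  qed
  also have "\<dots> = integral {a..b} (\<lambda>r. \<integral>\<omega>. Y r \<omega> \<partial>M)"
  proof -
    have "integrable T (\<lambda>r. \<integral>\<omega>. Y r \<omega> \<partial>M)"
      using integrable_fst'[OF intG] by simp
    then have si: "set_integrable lborel {a..b} (\<lambda>r. \<integral>\<omega>. Y r \<omega> \<partial>M)"
      unfolding set_integrable_def T_def by (subst (asm) integrable_restrict_space) simp_all
    have "(\<integral>r. (\<integral>\<omega>. Y r \<omega> \<partial>M) \<partial>T) = (LINT r:{a..b}|lborel. (\<integral>\<omega>. Y r \<omega> \<partial>M))"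
      unfolding T_def set_lebesgue_integral_def by (rule integral_restrict_space) simp
    also have "\<dots> = integral {a..b} (\<lambda>r. \<integral>\<omega>. Y r \<omega> \<partial>M)" by (rule set_borel_integral_eq_integral(2)[OF si])
    finally show ?thesis .
  qed
  finally show "(\<integral>\<omega>. integral {a..b} (\<lambda>r. Y r \<omega>) \<partial>M) = integral {a..b} (\<lambda>r. \<integral>\<omega>. Y r \<omega> \<partial>M)" .
qed

locale spctx =
  fixes N :: nat and M :: "'a measure" and F :: "real \<Rightarrow> 'a measure"
    and X :: "real \<Rightarrow> 'a \<Rightarrow> nat \<times> real" and L :: "nat \<Rightarrow> real" and lam :: real
  assumes N2: "N \<ge> 2" and BM: "spider_BM N M F X" and Lpos: "\<forall>i<N. L i > 0" and lam: "lam > 0"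
begin

definition "kk = sqrt (2 * lam)"
definition "Phi t \<omega> = tf0 N L kk (fst (X t \<omega>)) (snd (X t \<omega>))"
definition "Psi t \<omega> = tf2 N L kk (fst (X t \<omega>)) (snd (X t \<omega>)) / 2"
definition "Mt t \<omega> = Phi t \<omega> - Phi 0 \<omega> - integral {0..t} (\<lambda>r. Psi r \<omega>)"
definition "Kt t \<omega> = integral {0..t} (\<lambda>r. exp (- lam * r) * Mt r \<omega>)"
definition "Zt t \<omega> = exp (- lam * t) * Mt t \<omega> + lam * Kt t \<omega>"

lemma kk_pos: "kk > 0" using lam by (simp add: kk_def)
lemma kk_sq: "kk^2 = 2 * lam" using lam by (simp add: kk_def)

lemma P: "prob_space M" using BM by (simp add: spider_BM_def)
lemma filt: "filtration (space M) F" using BM by (simp add: spider_BM_def)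
lemma subF: "sets (F t) \<subseteq> sets M" using BM by (simp add: spider_BM_def)
lemma spF: "space (F t) = space M" using filt by (simp add: filtration_def)
lemma monoF: "s \<le> t \<Longrightarrow> sets (F s) \<subseteq> sets (F t)" using filt by (simp add: filtration_def)
lemma subalg: "subalgebra M (F t)" using subF spF by (simp add: subalgebra_def)
lemma Xmeas: "t \<ge> 0 \<Longrightarrow> X t \<in> measurable (F t) (count_space UNIV \<Otimes>\<^sub>M borel)"
  using BM by (simp add: spider_BM_def)
lemma Xpt: "\<omega> \<in> space M \<Longrightarrow> t \<ge> 0 \<Longrightarrow> sp_point N (X t \<omega>)"
  using BM by (simp add: spider_BM_def)
lemma X0: "\<omega> \<in> space M \<Longrightarrow> snd (X 0 \<omega>) = 0"
  using BM by (simp add: spider_BM_def)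
lemma Xcont: "\<omega> \<in> space M \<Longrightarrow> sp_continuous_path (\<lambda>t. X t \<omega>)"
  using BM by (simp add: spider_BM_def)
lemma dom: "sp_gen_domain N (tf0 N L kk) (tf1 N L kk) (tf2 N L kk)"
  using N2 Lpos kk_pos by (intro tf_domain) auto
lemma mart: "is_martingale M F Mt"
proof -
  have "is_martingale M F (\<lambda>t \<omega>. tf0 N L kk (fst (X t \<omega>)) (snd (X t \<omega>)) - tf0 N L kk (fst (X 0 \<omega>)) (snd (X 0 \<omega>))
           - integral {0..t} (\<lambda>r. tf2 N L kk (fst (X r \<omega>)) (snd (X r \<omega>)) / 2))"
    using BM dom unfolding spider_BM_def by blast
  then show ?thesis unfolding Mt_def[abs_def] Phi_def Psi_def .
qed

interpretation Mp: prob_space M by (rule P)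

lemma tf0_cont: "continuous_on UNIV (tf0 N L kk i)"
  unfolding tf0_def
  by (intro continuous_at_imp_continuous_on ballI) (rule DERIV_isCont[OF glue0_deriv])

lemma tf2_cont': "continuous_on UNIV (tf2 N L kk i)"
  unfolding tf2_def by (rule glue2_cont)

lemma dom_facts:
  shows "\<forall>i<N. tf0 N L kk i 0 = tf0 N L kk 0 0" "\<forall>i<N. tf2 N L kk i 0 = tf2 N L kk 0 0"
  using dom unfolding sp_gen_domain_def by blast+

lemma bound_ex: "\<exists>B. \<forall>i<N. \<forall>x\<ge>0. \<bar>tf0 N L kk i x\<bar> \<le> B \<and> \<bar>tf2 N L kk i x\<bar> \<le> B"
  using dom unfolding sp_gen_domain_def by blast

definition "BB = (SOME B. \<forall>i<N. \<forall>x\<ge>0. \<bar>tf0 N L kk i x\<bar> \<le> B \<and> \<bar>tf2 N L kk i x\<bar> \<le> B)"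

lemma BB: "\<forall>i<N. \<forall>x\<ge>0. \<bar>tf0 N L kk i x\<bar> \<le> BB \<and> \<bar>tf2 N L kk i x\<bar> \<le> BB"
  unfolding BB_def by (rule someI_ex[OF bound_ex])

lemma BB_nonneg: "BB \<ge> 0"
proof -
  have "0 < N" using N2 by simp
  then have "\<bar>tf0 N L kk 0 0\<bar> \<le> BB" using BB by auto
  then show ?thesis by linarith
qed

lemma Phi_bnd: "\<omega> \<in> space M \<Longrightarrow> t \<ge> 0 \<Longrightarrow> \<bar>Phi t \<omega>\<bar> \<le> BB"
proof -
  assume "\<omega> \<in> space M" "t \<ge> 0"
  then have "fst (X t \<omega>) < N" "snd (X t \<omega>) \<ge> 0" using Xpt[of \<omega> t] by (auto simp: sp_point_def)
  then show ?thesis using BB unfolding Phi_def by blast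
qed

lemma Psi_bnd: "\<omega> \<in> space M \<Longrightarrow> t \<ge> 0 \<Longrightarrow> \<bar>Psi t \<omega>\<bar> \<le> BB"
proof -
  assume "\<omega> \<in> space M" "t \<ge> 0"
  then have "fst (X t \<omega>) < N" "snd (X t \<omega>) \<ge> 0" using Xpt[of \<omega> t] by (auto simp: sp_point_def)
  then have "\<bar>tf2 N L kk (fst (X t \<omega>)) (snd (X t \<omega>))\<bar> \<le> BB"
    using BB by blast
  then show ?thesis unfolding Psi_def using BB_nonneg by simp
qed

lemma Phi_cont: "\<omega> \<in> space M \<Longrightarrow> continuous_on {0..} (\<lambda>t. Phi t \<omega>)"
proof -
  assume w: "\<omega> \<in> space M"
  show ?thesis unfolding Phi_def
  proof (rule path_fun_cont[OF Xcont[OF w], of N "tf0 N L kk"])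
    show "\<forall>i<N. tf0 N L kk i 0 = tf0 N L kk 0 0" by (rule dom_facts(1))
    show "\<forall>t\<ge>0. sp_point N (X t \<omega>)" using Xpt w by auto
    show "\<forall>i<N. continuous_on {0..} (tf0 N L kk i)"
      using continuous_on_subset[OF tf0_cont] by blast
  qed
qed

lemma Psi_cont: "\<omega> \<in> space M \<Longrightarrow> continuous_on {0..} (\<lambda>t. Psi t \<omega>)"
proof -
  assume w: "\<omega> \<in> space M"
  have "continuous_on {0..} (\<lambda>t. (\<lambda>i x. tf2 N L kk i x / 2) (fst (X t \<omega>)) (snd (X t \<omega>)))"
  proof (rule path_fun_cont[OF Xcont[OF w]])
    show "\<forall>t\<ge>0. sp_point N (X t \<omega>)" using Xpt w by auto
    show "\<forall>i<N. tf2 N L kk i 0 / 2 = tf2 N L kk 0 0 / 2" using dom_facts(2) by metis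
    show "\<forall>i<N. continuous_on {0..} (\<lambda>x. tf2 N L kk i x / 2)"
    proof (intro allI impI continuous_on_divide continuous_on_const)
      fix i show "continuous_on {0..} (tf2 N L kk i)" using continuous_on_subset[OF tf2_cont'] by blast
    qed simp
  qed
  then show ?thesis unfolding Psi_def by simp
qed

lemma pf_meas:
  fixes g :: "nat \<Rightarrow> real \<Rightarrow> real"
  assumes "\<And>i. continuous_on UNIV (g i)"
  shows "(\<lambda>p. g (fst p) (snd p)) \<in> borel_measurable (count_space UNIV \<Otimes>\<^sub>M borel)"
proof (rule measurable_compose_countable'[where I=UNIV and f="\<lambda>i p. g i (snd p)"])
  fix i show "(\<lambda>p. g i (snd p)) \<in> borel_measurable (count_space UNIV \<Otimes>\<^sub>M borel)"
    by (rule borel_measurable_continuous_on[OF assms measurable_snd])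
qed (simp_all add: measurable_fst)

lemma Phi_measF: "t \<ge> 0 \<Longrightarrow> Phi t \<in> borel_measurable (F t)"
proof -
  assume t: "t \<ge> 0"
  have "(\<lambda>\<omega>. (\<lambda>p. tf0 N L kk (fst p) (snd p)) (X t \<omega>)) \<in> borel_measurable (F t)"
    by (rule measurable_compose[OF Xmeas[OF t] pf_meas[OF tf0_cont]])
  then show ?thesis unfolding Phi_def[abs_def] by simp
qed

lemma Phi_meas: "t \<ge> 0 \<Longrightarrow> Phi t \<in> borel_measurable M"
  by (rule measurable_from_subalg[OF subalg Phi_measF])

lemma Mt_measF: "t \<ge> 0 \<Longrightarrow> Mt t \<in> borel_measurable (F t)"
  using mart unfolding is_martingale_def by blast

lemma Mt_meas: "t \<ge> 0 \<Longrightarrow> Mt t \<in> borel_measurable M"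
  by (rule measurable_from_subalg[OF subalg Mt_measF])

lemma Mt_mart: "0 \<le> s \<Longrightarrow> s \<le> t \<Longrightarrow> A \<in> sets (F s) \<Longrightarrow>
  (\<integral>\<omega>. indicator A \<omega> * Mt t \<omega> \<partial>M) = (\<integral>\<omega>. indicator A \<omega> * Mt s \<omega> \<partial>M)"
  using mart unfolding is_martingale_def by blast

lemma Psi_contI: "\<omega> \<in> space M \<Longrightarrow> 0 \<le> a \<Longrightarrow> continuous_on {a..b} (\<lambda>t. Psi t \<omega>)"
proof -
  assume "\<omega> \<in> space M" "0 \<le> a"
  moreover have "{a..b} \<subseteq> {0..}" using \<open>0 \<le> a\<close> by auto
  ultimately show ?thesis using continuous_on_subset[OF Psi_cont] by blast
qed

lemma Phi_contI: "\<omega> \<in> space M \<Longrightarrow> 0 \<le> a \<Longrightarrow> continuous_on {a..b} (\<lambda>t. Phi t \<omega>)"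
proof -
  assume "\<omega> \<in> space M" "0 \<le> a"
  moreover have "{a..b} \<subseteq> {0..}" using \<open>0 \<le> a\<close> by auto
  ultimately show ?thesis using continuous_on_subset[OF Phi_cont] by blast
qed

lemma I_cont: "\<omega> \<in> space M \<Longrightarrow> continuous_on {0..T} (\<lambda>t. integral {0..t} (\<lambda>r. Psi r \<omega>))"
  by (rule indefinite_integral_continuous_1, rule integrable_continuous_interval, rule Psi_contI) auto

lemma I_bnd: "\<omega> \<in> space M \<Longrightarrow> t \<ge> 0 \<Longrightarrow> \<bar>integral {0..t} (\<lambda>r. Psi r \<omega>)\<bar> \<le> BB * t"
proof -
  assume w: "\<omega> \<in> space M" and t: "t \<ge> 0"
  have "norm (integral {0..t} (\<lambda>r. Psi r \<omega>)) \<le> BB * (t - 0)"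
    by (rule integral_bound[OF t Psi_contI[OF w order_refl]]) (use Psi_bnd w in auto)
  then show ?thesis by simp
qed

lemma Mt_cont: "\<omega> \<in> space M \<Longrightarrow> continuous_on {0..T} (\<lambda>t. Mt t \<omega>)"
  unfolding Mt_def
  by (intro continuous_on_diff continuous_on_const I_cont Phi_contI) auto

lemma Mt_bnd: "\<omega> \<in> space M \<Longrightarrow> t \<ge> 0 \<Longrightarrow> \<bar>Mt t \<omega>\<bar> \<le> 2 * BB + BB * t"
proof -
  assume w: "\<omega> \<in> space M" and t: "t \<ge> 0"
  have "\<bar>Phi t \<omega>\<bar> \<le> BB" "\<bar>Phi 0 \<omega>\<bar> \<le> BB" using Phi_bnd w t by auto
  moreover have "\<bar>integral {0..t} (\<lambda>r. Psi r \<omega>)\<bar> \<le> BB * t" using I_bnd w t by auto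
  ultimately show ?thesis unfolding Mt_def by linarith
qed


lemma hk_cmul: "integral S (\<lambda>x. c * f x) = c * integral S (f :: real \<Rightarrow> real)"
  using integral_cmul[of S c f] by simp

lemma bnd_integrable: fixes f :: "'a \<Rightarrow> real" and C :: real shows "f \<in> borel_measurable M \<Longrightarrow> (\<And>\<omega>. \<omega> \<in> space M \<Longrightarrow> \<bar>f \<omega>\<bar> \<le> C) \<Longrightarrow> integrable M f"
  by (rule Mp.integrable_const_bound[where B=C]) (auto intro!: AE_I2)

lemma emt_cont: "\<omega> \<in> space M \<Longrightarrow> continuous_on {0..T} (\<lambda>r. exp (- lam * r) * Mt r \<omega>)"
  by (intro continuous_on_mult continuous_intros Mt_cont)

lemma emt_cont': "\<omega> \<in> space M \<Longrightarrow> 0 \<le> a \<Longrightarrow> continuous_on {a..b} (\<lambda>r. exp (- lam * r) * Mt r \<omega>)"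
proof -
  assume "\<omega> \<in> space M" "0 \<le> a"
  moreover have "{a..b} \<subseteq> {0..b}" using \<open>0 \<le> a\<close> by auto
  ultimately show ?thesis using continuous_on_subset[OF emt_cont] by blast
qed

lemma emt_bnd: "\<omega> \<in> space M \<Longrightarrow> 0 \<le> r \<Longrightarrow> r \<le> T \<Longrightarrow> \<bar>exp (- lam * r) * Mt r \<omega>\<bar> \<le> 2 * BB + BB * T"
proof -
  assume w: "\<omega> \<in> space M" and r: "0 \<le> r" "r \<le> T"
  have e: "exp (- lam * r) \<le> 1" "exp (- lam * r) \<ge> 0" using lam r by auto
  have "\<bar>Mt r \<omega>\<bar> \<le> 2 * BB + BB * r" by (rule Mt_bnd[OF w r(1)])
  also have "\<dots> \<le> 2 * BB + BB * T" using r BB_nonneg by (simp add: mult_left_mono)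
  finally have m: "\<bar>Mt r \<omega>\<bar> \<le> 2 * BB + BB * T" .
  have "\<bar>exp (- lam * r) * Mt r \<omega>\<bar> = exp (- lam * r) * \<bar>Mt r \<omega>\<bar>" by (simp add: abs_mult)
  also have "\<dots> \<le> 1 * \<bar>Mt r \<omega>\<bar>" using e by (intro mult_right_mono) auto
  finally show ?thesis using m by simp
qed

lemma Kt_cont: "\<omega> \<in> space M \<Longrightarrow> continuous_on {0..T} (\<lambda>t. Kt t \<omega>)"
  unfolding Kt_def
  by (rule indefinite_integral_continuous_1, rule integrable_continuous_interval, rule emt_cont)

lemma Kt_bnd: "\<omega> \<in> space M \<Longrightarrow> 0 \<le> t \<Longrightarrow> t \<le> T \<Longrightarrow> \<bar>Kt t \<omega>\<bar> \<le> (2 * BB + BB * T) * T"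
proof -
  assume w: "\<omega> \<in> space M" and t: "0 \<le> t" "t \<le> T"
  have "norm (Kt t \<omega>) \<le> (2 * BB + BB * T) * (t - 0)"
    unfolding Kt_def
    by (rule integral_bound[OF t(1) emt_cont'[OF w order_refl]]) (use emt_bnd[OF w] t in auto)
  also have "\<dots> \<le> (2 * BB + BB * T) * T" using t BB_nonneg by (intro mult_left_mono) auto
  finally show ?thesis by simp
qed

lemma emt_meas: "0 \<le> r \<Longrightarrow> (\<lambda>\<omega>. exp (- lam * r) * Mt r \<omega>) \<in> borel_measurable M"
  using Mt_meas by measurable

lemma Kt_meas: "0 \<le> t \<Longrightarrow> Kt t \<in> borel_measurable M"
proof -
  assume t: "0 \<le> t"
  have "(\<lambda>\<omega>. integral {0..t} (\<lambda>r. exp (- lam * r) * Mt r \<omega>)) \<in> borel_measurable M"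
  proof (rule fubini_interval(1)[OF P t, where C="2 * BB + BB * t"])
    fix r assume "r \<in> {0..t}"
    then show "(\<lambda>\<omega>. exp (- lam * r) * Mt r \<omega>) \<in> borel_measurable M" by (intro emt_meas) auto
  next
    fix \<omega> assume "\<omega> \<in> space M"
    then show "continuous_on {0..t} (\<lambda>r. exp (- lam * r) * Mt r \<omega>)" by (rule emt_cont)
  next
    fix r \<omega> assume "r \<in> {0..t}" "\<omega> \<in> space M"
    then show "\<bar>exp (- lam * r) * Mt r \<omega>\<bar> \<le> 2 * BB + BB * t" using emt_bnd by auto
  qed
  then show ?thesis unfolding Kt_def[abs_def] .
qed

lemma Zt_meas: "0 \<le> t \<Longrightarrow> Zt t \<in> borel_measurable M"
  unfolding Zt_def[abs_def] using Mt_meas Kt_meas by measurable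

lemma Zt_cont: "\<omega> \<in> space M \<Longrightarrow> continuous_on {0..T} (\<lambda>t. Zt t \<omega>)"
  unfolding Zt_def by (intro continuous_intros Mt_cont Kt_cont)

definition "ZB T = (2 * BB + BB * T) + lam * ((2 * BB + BB * T) * T)"

lemma Zt_bnd: "\<omega> \<in> space M \<Longrightarrow> 0 \<le> t \<Longrightarrow> t \<le> T \<Longrightarrow> \<bar>Zt t \<omega>\<bar> \<le> ZB T"
proof -
  assume w: "\<omega> \<in> space M" and t: "0 \<le> t" "t \<le> T"
  have "\<bar>exp (- lam * t) * Mt t \<omega>\<bar> \<le> 2 * BB + BB * T" by (rule emt_bnd[OF w t])
  moreover have "\<bar>lam * Kt t \<omega>\<bar> \<le> lam * ((2 * BB + BB * T) * T)"
    using Kt_bnd[OF w t] lam by (simp add: abs_mult mult_left_mono)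
  ultimately show ?thesis unfolding Zt_def ZB_def by linarith
qed

lemma Zt_int: "0 \<le> t \<Longrightarrow> integrable M (Zt t)"
  by (rule bnd_integrable[OF Zt_meas, where C="ZB t"]) (auto intro: Zt_bnd)


lemma exp_integral: "s \<le> t \<Longrightarrow> integral {s..t} (\<lambda>r. exp (- lam * r)) = (exp (- lam * s) - exp (- lam * t)) / lam"
proof -
  assume st: "s \<le> t"
  have "((\<lambda>r. exp (- lam * r)) has_integral ((- exp (- lam * t) / lam) - (- exp (- lam * s) / lam))) {s..t}"
  proof (rule fundamental_theorem_of_calculus[OF st])
    fix x :: real
    have "((\<lambda>r. - exp (- lam * r) / lam) has_real_derivative exp (- lam * x)) (at x within {s..t})"
      using lam by (auto intro!: derivative_eq_intros)
    then show "((\<lambda>r. - exp (- lam * r) / lam) has_vector_derivative exp (- lam * x)) (at x within {s..t})"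
      by (simp add: has_real_derivative_iff_has_vector_derivative)
  qed
  then show ?thesis by (simp add: integral_unique diff_divide_distrib)
qed

lemma G3_meas: "0 \<le> s \<Longrightarrow> s \<le> t \<Longrightarrow> (\<lambda>\<omega>. integral {s..t} (\<lambda>r. exp (- lam * r) * Mt r \<omega>)) \<in> borel_measurable M"
proof (rule fubini_interval(1)[OF P, where C="2 * BB + BB * t"])
  assume "0 \<le> s" "s \<le> t"
  then show "s \<le> t" by simp
  fix r assume "r \<in> {s..t}"
  then show "(\<lambda>\<omega>. exp (- lam * r) * Mt r \<omega>) \<in> borel_measurable M" using \<open>0 \<le> s\<close> by (intro emt_meas) auto
next
  fix \<omega> assume "0 \<le> s" "\<omega> \<in> space M"
  then show "continuous_on {s..t} (\<lambda>r. exp (- lam * r) * Mt r \<omega>)" by (rule emt_cont'[rotated])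
next
  fix r \<omega> assume "0 \<le> s" "r \<in> {s..t}" "\<omega> \<in> space M"
  then show "\<bar>exp (- lam * r) * Mt r \<omega>\<bar> \<le> 2 * BB + BB * t" using emt_bnd by auto
qed

lemma Zt_mart:
  assumes st: "0 \<le> s" "s \<le> t" and A: "A \<in> sets (F s)"
  shows "(\<integral>\<omega>. indicator A \<omega> * Zt t \<omega> \<partial>M) = (\<integral>\<omega>. indicator A \<omega> * Zt s \<omega> \<partial>M)"
proof -
  have AM: "A \<in> sets M" using A subF by auto
  have t0: "0 \<le> t" using st by simp
  define m where "m = (\<integral>\<omega>. indicator A \<omega> * Mt s \<omega> \<partial>M)"
  have mr: "(\<integral>\<omega>. indicator A \<omega> * Mt r \<omega> \<partial>M) = m" if "r \<in> {s..t}" for r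
    unfolding m_def using that st A by (intro Mt_mart) auto
  define G3 where "G3 \<omega> = integral {s..t} (\<lambda>r. exp (- lam * r) * Mt r \<omega>)" for \<omega>
  have G3m: "G3 \<in> borel_measurable M" unfolding G3_def[abs_def] by (rule G3_meas[OF st])
  have G3b: "\<bar>G3 \<omega>\<bar> \<le> (2 * BB + BB * t) * (t - s)" if w: "\<omega> \<in> space M" for \<omega>
  proof -
    have "norm (G3 \<omega>) \<le> (2 * BB + BB * t) * (t - s)"
      unfolding G3_def
      by (rule integral_bound[OF st(2) emt_cont'[OF w st(1)]]) (use emt_bnd[OF w] st in auto)
    then show ?thesis by simp
  qed
  have c1: "0 \<le> 2 * BB + BB * t" "0 \<le> 2 * BB + BB * s" using BB_nonneg st by auto
  have c2: "0 \<le> (2 * BB + BB * s) * s" "0 \<le> (2 * BB + BB * t) * (t - s)" using c1 st by auto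
  have Kcomb: "Kt t \<omega> = Kt s \<omega> + G3 \<omega>" if w: "\<omega> \<in> space M" for \<omega>
    unfolding Kt_def G3_def
    by (rule Henstock_Kurzweil_Integration.integral_combine[symmetric, OF st])
       (rule integrable_continuous_interval[OF emt_cont[OF w]])
  have i1: "integrable M (\<lambda>\<omega>. indicator A \<omega> * Mt t \<omega>)"
    by (rule bnd_integrable[where C="2 * BB + BB * t"])
       (use AM Mt_meas[OF t0] Mt_bnd t0 c1 in \<open>auto simp: indicator_def\<close>)
  have i1s: "integrable M (\<lambda>\<omega>. indicator A \<omega> * Mt s \<omega>)"
    by (rule bnd_integrable[where C="2 * BB + BB * s"])
       (use AM Mt_meas[OF st(1)] Mt_bnd st(1) c1 in \<open>auto simp: indicator_def\<close>)
  have i2: "integrable M (\<lambda>\<omega>. indicator A \<omega> * Kt s \<omega>)"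
    by (rule bnd_integrable[where C="(2 * BB + BB * s) * s"])
       (use AM Kt_meas[OF st(1)] Kt_bnd st(1) c2 in \<open>auto simp: indicator_def\<close>)
  have i3: "integrable M (\<lambda>\<omega>. indicator A \<omega> * G3 \<omega>)"
    by (rule bnd_integrable[where C="(2 * BB + BB * t) * (t - s)"])
       (use AM G3m G3b c2 in \<open>auto simp: indicator_def\<close>)
  have "(\<integral>\<omega>. indicator A \<omega> * Zt t \<omega> \<partial>M) =
      (\<integral>\<omega>. exp (- lam * t) * (indicator A \<omega> * Mt t \<omega>) + (lam * (indicator A \<omega> * Kt s \<omega>) + lam * (indicator A \<omega> * G3 \<omega>)) \<partial>M)"
    by (rule Bochner_Integration.integral_cong) (auto simp: Zt_def Kcomb algebra_simps)
  also have "\<dots> = exp (- lam * t) * (\<integral>\<omega>. indicator A \<omega> * Mt t \<omega> \<partial>M) +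
      (lam * (\<integral>\<omega>. indicator A \<omega> * Kt s \<omega> \<partial>M) + lam * (\<integral>\<omega>. indicator A \<omega> * G3 \<omega> \<partial>M))"
    using i1 i2 i3 by simp
  also have "(\<integral>\<omega>. indicator A \<omega> * G3 \<omega> \<partial>M) = m * ((exp (- lam * s) - exp (- lam * t)) / lam)"
  proof -
    have "(\<integral>\<omega>. indicator A \<omega> * G3 \<omega> \<partial>M) = (\<integral>\<omega>. integral {s..t} (\<lambda>r. indicator A \<omega> * (exp (- lam * r) * Mt r \<omega>)) \<partial>M)"
      unfolding G3_def by (simp add: hk_cmul)
    also have "\<dots> = integral {s..t} (\<lambda>r. \<integral>\<omega>. indicator A \<omega> * (exp (- lam * r) * Mt r \<omega>) \<partial>M)"
    proof (rule fubini_interval(2)[OF P st(2), where C="2 * BB + BB * t"])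
      fix r assume "r \<in> {s..t}"
      then show "(\<lambda>\<omega>. indicator A \<omega> * (exp (- lam * r) * Mt r \<omega>)) \<in> borel_measurable M"
      proof -
        have [measurable]: "Mt r \<in> borel_measurable M" using st \<open>r \<in> {s..t}\<close> by (intro Mt_meas) auto
        show ?thesis using AM by measurable
      qed
    next
      fix \<omega> assume "\<omega> \<in> space M"
      then show "continuous_on {s..t} (\<lambda>r. indicator A \<omega> * (exp (- lam * r) * Mt r \<omega>))"
        by (intro continuous_on_mult continuous_on_const emt_cont' st)
    next
      fix r \<omega> assume "r \<in> {s..t}" "\<omega> \<in> space M"
      then show "\<bar>indicator A \<omega> * (exp (- lam * r) * Mt r \<omega>)\<bar> \<le> 2 * BB + BB * t"
        using emt_bnd[of \<omega> r t] st BB_nonneg by (auto simp: indicator_def)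
    qed
    also have "\<dots> = integral {s..t} (\<lambda>r. m * exp (- lam * r))"
    proof (rule integral_cong)
      fix r assume r: "r \<in> {s..t}"
      have "(\<integral>\<omega>. indicator A \<omega> * (exp (- lam * r) * Mt r \<omega>) \<partial>M) = (\<integral>\<omega>. exp (- lam * r) * (indicator A \<omega> * Mt r \<omega>) \<partial>M)"
        by (simp add: algebra_simps)
      also have "\<dots> = exp (- lam * r) * m" using mr[OF r] by simp
      finally show "(\<integral>\<omega>. indicator A \<omega> * (exp (- lam * r) * Mt r \<omega>) \<partial>M) = m * exp (- lam * r)" by simp
    qed
    also have "\<dots> = m * ((exp (- lam * s) - exp (- lam * t)) / lam)"
      using exp_integral[OF st(2)] by (simp add: hk_cmul)
    finally show ?thesis .
  qed
  also have "(\<integral>\<omega>. indicator A \<omega> * Mt t \<omega> \<partial>M) = m" using mr st by auto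
  also have "exp (- lam * t) * m + (lam * (\<integral>\<omega>. indicator A \<omega> * Kt s \<omega> \<partial>M) + lam * (m * ((exp (- lam * s) - exp (- lam * t)) / lam)))
      = exp (- lam * s) * m + lam * (\<integral>\<omega>. indicator A \<omega> * Kt s \<omega> \<partial>M)"
    using lam by (simp add: field_simps)
  also have "\<dots> = (\<integral>\<omega>. exp (- lam * s) * (indicator A \<omega> * Mt s \<omega>) + lam * (indicator A \<omega> * Kt s \<omega>) \<partial>M)"
    using i1s i2 by (simp add: m_def)
  also have "\<dots> = (\<integral>\<omega>. indicator A \<omega> * Zt s \<omega> \<partial>M)"
    by (rule Bochner_Integration.integral_cong) (auto simp: Zt_def algebra_simps)
  finally show ?thesis .
qed

end

context spctx begin

definition "dd s \<omega> = (\<Prod>i<N. \<bar>yc i (\<lambda>t. X t \<omega>) s - L i\<bar>)"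

lemma dd_nonneg: "dd s \<omega> \<ge> 0" unfolding dd_def by (intro prod_nonneg) auto

lemma yc_eq_L: "i < N \<Longrightarrow> yc i w s = L i \<longleftrightarrow> w s = (i, L i)" for w :: "real \<Rightarrow> nat \<times> real"
  using Lpos by (cases "w s") (auto simp: yc_def)

lemma HS_iff: "s \<in> hit_set N L X \<omega> \<longleftrightarrow> s \<ge> 0 \<and> dd s \<omega> = 0"
proof -
  have "dd s \<omega> = 0 \<longleftrightarrow> (\<exists>i<N. yc i (\<lambda>t. X t \<omega>) s = L i)"
    unfolding dd_def by (subst prod_zero_iff) auto
  also have "\<dots> \<longleftrightarrow> (\<exists>i<N. X s \<omega> = (i, L i))" using yc_eq_L by auto
  finally show ?thesis unfolding hit_set_def by auto
qed

lemma dd_cont: "\<omega> \<in> space M \<Longrightarrow> continuous_on {0..} (\<lambda>s. dd s \<omega>)"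
proof -
  assume w: "\<omega> \<in> space M"
  have "\<forall>t\<ge>0. sp_point N (X t \<omega>)" using Xpt w by auto
  then show ?thesis unfolding dd_def
    by (intro continuous_on_prod continuous_on_rabs continuous_on_diff continuous_on_const yc_cont[OF Xcont[OF w]])
qed

lemma HS_closed: "\<omega> \<in> space M \<Longrightarrow> closed (hit_set N L X \<omega>)"
proof -
  assume w: "\<omega> \<in> space M"
  have "hit_set N L X \<omega> = {s \<in> {0..}. dd s \<omega> = 0}" using HS_iff by auto
  then show ?thesis using continuous_closed_preimage_constant[OF dd_cont[OF w] closed_atLeast] by simp
qed

lemma HS_Inf: "\<omega> \<in> space M \<Longrightarrow> hit_set N L X \<omega> \<noteq> {} \<Longrightarrow> hit_time N L X \<omega> \<in> hit_set N L X \<omega>"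
proof -
  assume w: "\<omega> \<in> space M" and ne: "hit_set N L X \<omega> \<noteq> {}"
  have "bdd_below (hit_set N L X \<omega>)" by (auto simp: bdd_below_def hit_set_def)
  then show ?thesis unfolding hit_time_def using closed_contains_Inf[OF ne _ HS_closed[OF w]] by blast
qed

lemma HS_le: "s \<in> hit_set N L X \<omega> \<Longrightarrow> hit_time N L X \<omega> \<le> s"
  unfolding hit_time_def by (rule cInf_lower) (auto simp: bdd_below_def hit_set_def)

lemma dd_measF: "0 \<le> q \<Longrightarrow> (\<lambda>\<omega>. dd q \<omega>) \<in> borel_measurable (F q)"
proof -
  assume q: "0 \<le> q"
  have "(\<lambda>\<omega>. yc i (\<lambda>t. X t \<omega>) q) \<in> borel_measurable (F q)" for i
  proof -
    have c: "continuous_on UNIV (\<lambda>x::real. if j = i then x else 0)" for j by (cases "j = i") auto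
    have "(\<lambda>\<omega>. (\<lambda>p. (\<lambda>j x. if j = i then x else 0) (fst p) (snd p)) (X q \<omega>)) \<in> borel_measurable (F q)"
      by (rule measurable_compose[OF Xmeas[OF q] pf_meas[OF c]])
    then show ?thesis unfolding yc_def by simp
  qed
  then show ?thesis unfolding dd_def by (intro borel_measurable_prod borel_measurable_abs borel_measurable_diff) auto
qed

definition "Dc c = ({0..c} \<inter> \<rat>) \<union> {c}"

lemma Dc_countable: "countable (Dc c)"
proof -
  have "countable ({0..c} \<inter> \<rat>)" by (rule countable_subset[OF _ countable_rat]) auto
  then show ?thesis unfolding Dc_def by simp
qed

lemma hit_by_iff:
  assumes w: "\<omega> \<in> space M" and c: "0 \<le> c"
  shows "(\<exists>s\<in>{0..c}. dd s \<omega> = 0) \<longleftrightarrow> (\<forall>m::nat. \<exists>q\<in>Dc c. dd q \<omega> < inverse (real (Suc m)))"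
proof
  assume "\<exists>s\<in>{0..c}. dd s \<omega> = 0"
  then obtain s where s: "s \<in> {0..c}" "dd s \<omega> = 0" by blast
  show "\<forall>m::nat. \<exists>q\<in>Dc c. dd q \<omega> < inverse (real (Suc m))"
  proof
    fix m :: nat
    have e: "inverse (real (Suc m)) > 0" by simp
    from dd_cont[OF w] s(1) e obtain d where d: "d > 0" "\<forall>y\<in>{0..}. dist y s < d \<longrightarrow> dist (dd y \<omega>) (dd s \<omega>) < inverse (real (Suc m))"
      unfolding continuous_on_iff by (metis atLeastAtMost_iff atLeast_iff)
    show "\<exists>q\<in>Dc c. dd q \<omega> < inverse (real (Suc m))"
    proof (cases "s = c")
      case True
      then show ?thesis using s e by (auto simp: Dc_def)
    next
      case False
      then have "s < min c (s + d)" using s d by auto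
      then obtain q where q: "q \<in> \<rat>" "s < q" "q < min c (s + d)" using Rats_dense_in_real by blast
      then have "q \<in> Dc c" using s by (auto simp: Dc_def)
      moreover have "dist q s < d" using q by (auto simp: dist_real_def)
      then have "dist (dd q \<omega>) (dd s \<omega>) < inverse (real (Suc m))" using d q s by auto
      then have "dd q \<omega> < inverse (real (Suc m))" using s by (simp add: dist_real_def)
      ultimately show ?thesis by blast
    qed
  qed
next
  assume H: "\<forall>m::nat. \<exists>q\<in>Dc c. dd q \<omega> < inverse (real (Suc m))"
  show "\<exists>s\<in>{0..c}. dd s \<omega> = 0"
  proof (rule ccontr)
    assume nz: "\<not> (\<exists>s\<in>{0..c}. dd s \<omega> = 0)"
    have "continuous_on {0..c} (\<lambda>s. dd s \<omega>)" using continuous_on_subset[OF dd_cont[OF w]] by auto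
    then obtain x0 where x0: "x0 \<in> {0..c}" "\<forall>y\<in>{0..c}. dd x0 \<omega> \<le> dd y \<omega>"
      using continuous_attains_inf[of "{0..c}" "\<lambda>s. dd s \<omega>"] c by auto
    have "dd x0 \<omega> > 0" using nz x0(1) dd_nonneg[of x0 \<omega>] by force
    then obtain m where m: "inverse (real (Suc m)) < dd x0 \<omega>" using reals_Archimedean by blast
    obtain q where q: "q \<in> Dc c" "dd q \<omega> < inverse (real (Suc m))" using H by blast
    have "q \<in> {0..c}" using q(1) c by (auto simp: Dc_def)
    then show False using x0(2) q(2) m by force
  qed
qed


definition "rho T \<omega> = (if hit_set N L X \<omega> = {} then T else min T (hit_time N L X \<omega>))"

lemma rho_le: "rho T \<omega> \<le> T" unfolding rho_def by auto

lemma HS_nonneg: "s \<in> hit_set N L X \<omega> \<Longrightarrow> 0 \<le> s" unfolding hit_set_def by auto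

lemma rho_nonneg: "\<omega> \<in> space M \<Longrightarrow> 0 \<le> T \<Longrightarrow> 0 \<le> rho T \<omega>"
  unfolding rho_def using HS_Inf HS_nonneg by auto

lemma rho_iff:
  assumes w: "\<omega> \<in> space M" and cT: "c < T"
  shows "rho T \<omega> \<le> c \<longleftrightarrow> (\<exists>s\<in>{0..c}. dd s \<omega> = 0)"
proof
  assume r: "rho T \<omega> \<le> c"
  then have ne: "hit_set N L X \<omega> \<noteq> {}" using cT unfolding rho_def by (auto split: if_splits)
  then have "hit_time N L X \<omega> \<le> c" using r cT unfolding rho_def by auto
  moreover have "hit_time N L X \<omega> \<in> hit_set N L X \<omega>" by (rule HS_Inf[OF w ne])
  ultimately show "\<exists>s\<in>{0..c}. dd s \<omega> = 0" using HS_iff by fastforce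
next
  assume "\<exists>s\<in>{0..c}. dd s \<omega> = 0"
  then obtain s where s: "s \<in> {0..c}" "dd s \<omega> = 0" by blast
  then have sH: "s \<in> hit_set N L X \<omega>" using HS_iff by auto
  then have "hit_time N L X \<omega> \<le> s" by (rule HS_le)
  then show "rho T \<omega> \<le> c" using sH s unfolding rho_def by auto
qed

lemma dd_meas_c: "0 \<le> q \<Longrightarrow> q \<le> c \<Longrightarrow> (\<lambda>\<omega>. dd q \<omega>) \<in> borel_measurable (F c)"
proof -
  assume q: "0 \<le> q" "q \<le> c"
  have "subalgebra (F c) (F q)" using spF monoF[OF q(2)] by (simp add: subalgebra_def)
  then show ?thesis using dd_measF[OF q(1)] by (rule measurable_from_subalg)
qed

lemma rho_event: "0 \<le> c \<Longrightarrow> {\<omega> \<in> space M. rho T \<omega> \<le> c} \<in> sets (F c)"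
proof (cases "T \<le> c")
  case True
  then have "{\<omega> \<in> space M. rho T \<omega> \<le> c} = space (F c)" using rho_le[of T] spF by (auto intro: order_trans)
  then show ?thesis by simp
next
  case False
  assume c: "0 \<le> c"
  have eq: "{\<omega> \<in> space M. rho T \<omega> \<le> c} = (\<Inter>m::nat. \<Union>q\<in>Dc c. {\<omega> \<in> space (F c). dd q \<omega> < inverse (real (Suc m))})"
    (is "?A = ?B")
  proof
    show "?A \<subseteq> ?B" using rho_iff[of _ c T] hit_by_iff[OF _ c] False spF by auto
    show "?B \<subseteq> ?A"
    proof
      fix \<omega> assume "\<omega> \<in> ?B"
      then have w: "\<omega> \<in> space M" and H: "\<forall>m::nat. \<exists>q\<in>Dc c. dd q \<omega> < inverse (real (Suc m))"
        using spF by auto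
      then show "\<omega> \<in> ?A" using rho_iff[OF w, of c T] hit_by_iff[OF w c] False by auto
    qed
  qed
  have mem: "{\<omega> \<in> space (F c). dd q \<omega> < e} \<in> sets (F c)" if "q \<in> Dc c" for q e
  proof -
    have "0 \<le> q" "q \<le> c" using that c by (auto simp: Dc_def)
    then have [measurable]: "(\<lambda>\<omega>. dd q \<omega>) \<in> borel_measurable (F c)" by (rule dd_meas_c)
    show ?thesis by measurable
  qed
  have "?B \<in> sets (F c)" for dummy :: unit
  proof (rule sets.countable_INT)
    show "(\<lambda>m::nat. \<Union>q\<in>Dc c. {\<omega> \<in> space (F c). dd q \<omega> < inverse (real (Suc m))}) ` UNIV \<subseteq> sets (F c)"
      using mem Dc_countable by (auto intro!: sets.countable_UN'')
  qed simp
  then show ?thesis unfolding eq by simp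
qed

lemma region:
  assumes w: "\<omega> \<in> space M" and r: "0 \<le> r" "r \<le> rho T \<omega>"
  shows "snd (X r \<omega>) \<le> L (fst (X r \<omega>))"
proof (rule ccontr)
  assume "\<not> snd (X r \<omega>) \<le> L (fst (X r \<omega>))"
  then have gt: "L (fst (X r \<omega>)) < snd (X r \<omega>)" by simp
  define i where "i = fst (X r \<omega>)"
  have iN: "i < N" using Xpt[OF w r(1)] by (simp add: sp_point_def i_def)
  have Li: "L i > 0" using Lpos iN by simp
  have pts: "\<forall>t\<ge>0. sp_point N (X t \<omega>)" using Xpt w by auto
  have y0: "yc i (\<lambda>t. X t \<omega>) 0 \<le> L i" using X0[OF w] Li by (simp add: yc_def)
  have yr: "L i \<le> yc i (\<lambda>t. X t \<omega>) r" using gt by (simp add: yc_def i_def)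
  have cont: "continuous_on {0..r} (yc i (\<lambda>t. X t \<omega>))"
    using continuous_on_subset[OF yc_cont[OF Xcont[OF w] pts]] by auto
  obtain s where s0: "0 \<le> s" "s \<le> r" and s2: "yc i (\<lambda>t. X t \<omega>) s = L i"
    using IVT'[of "yc i (\<lambda>t. X t \<omega>)" 0 "L i" r, OF y0 yr r(1) cont] by blast
  have s: "s \<in> {0..r}" "yc i (\<lambda>t. X t \<omega>) s = L i" using s0 s2 by auto
  have Xs: "X s \<omega> = (i, L i)" using s(2) yc_eq_L[OF iN, of "\<lambda>t. X t \<omega>" s] by simp
  have sH: "s \<in> hit_set N L X \<omega>" unfolding hit_set_def using s0 iN Xs by blast
  have "s \<noteq> r"
  proof
    assume "s = r"
    then have "snd (X r \<omega>) = L i" using Xs by simp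
    moreover have "L (fst (X r \<omega>)) = L i" by (simp add: i_def)
    ultimately show False using gt by linarith
  qed
  then have "s < r" using s(1) by auto
  moreover have "rho T \<omega> \<le> s"
  proof -
    have ne: "hit_set N L X \<omega> \<noteq> {}" using sH by blast
    have "rho T \<omega> \<le> hit_time N L X \<omega>" unfolding rho_def using ne by simp
    then show ?thesis using HS_le[OF sH] by linarith
  qed
  ultimately show False using r by simp
qed

lemma Psi_eq:
  assumes w: "\<omega> \<in> space M" and r: "0 \<le> r" "r \<le> rho T \<omega>"
  shows "Psi r \<omega> = lam * Phi r \<omega>"
proof -
  have "snd (X r \<omega>) \<ge> 0" using Xpt[OF w r(1)] by (simp add: sp_point_def)
  then have "tf2 N L kk (fst (X r \<omega>)) (snd (X r \<omega>)) = kk^2 * tf0 N L kk (fst (X r \<omega>)) (snd (X r \<omega>))"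
    using region[OF w r] by (intro tf_eq)
  then show ?thesis unfolding Psi_def Phi_def kk_sq by simp
qed

lemma Phi_hit:
  assumes w: "\<omega> \<in> space M" and ne: "hit_set N L X \<omega> \<noteq> {}"
  shows "Phi (hit_time N L X \<omega>) \<omega> = 1"
proof -
  obtain i where i: "i < N" "X (hit_time N L X \<omega>) \<omega> = (i, L i)"
    using HS_Inf[OF w ne] unfolding hit_set_def by blast
  then show ?thesis unfolding Phi_def using tf_at_L[of L i kk N] Lpos kk_pos by simp
qed

lemma Phi0: "\<omega> \<in> space M \<Longrightarrow> Phi 0 \<omega> = tfa N L kk"
proof -
  assume w: "\<omega> \<in> space M"
  have "fst (X 0 \<omega>) < N" using Xpt[OF w, of 0] by (simp add: sp_point_def)
  then have "L (fst (X 0 \<omega>)) \<ge> 0" using Lpos by (simp add: less_imp_le)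
  then show ?thesis unfolding Phi_def X0[OF w] by (rule tf_origin)
qed

end

context spctx begin

lemma Zt_stop:
  assumes w: "\<omega> \<in> space M" and p: "0 \<le> p" and eqs: "\<And>r. 0 \<le> r \<Longrightarrow> r \<le> p \<Longrightarrow> Psi r \<omega> = lam * Phi r \<omega>"
  shows "Zt p \<omega> = exp (- lam * p) * Phi p \<omega> - Phi 0 \<omega>"
proof -
  define I where "I t = integral {0..t} (\<lambda>r. Psi r \<omega>)" for t
  define D where "D t = exp (- lam * t) * (- Phi 0 \<omega> - I t) + lam * Kt t \<omega> + Phi 0 \<omega>" for t
  have Deq: "Zt t \<omega> - exp (- lam * t) * Phi t \<omega> + Phi 0 \<omega> = D t" for t
    unfolding D_def Zt_def Mt_def I_def by (simp add: algebra_simps)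
  have der: "(D has_field_derivative 0) (at x within {0..p})" if x: "x \<in> {0..p}" for x
  proof -
    have I': "(I has_real_derivative Psi x \<omega>) (at x within {0..p})"
      unfolding I_def by (rule integral_has_real_derivative[OF Psi_contI[OF w order_refl] x])
    have K': "((\<lambda>t. Kt t \<omega>) has_real_derivative exp (- lam * x) * Mt x \<omega>) (at x within {0..p})"
      unfolding Kt_def by (rule integral_has_real_derivative[OF emt_cont[OF w] x])
    have E': "((\<lambda>t. exp (- lam * t)) has_real_derivative (- lam * exp (- lam * x))) (at x within {0..p})"
      by (auto intro!: derivative_eq_intros)
    have "(D has_real_derivative (- lam * exp (- lam * x)) * (- Phi 0 \<omega> - I x) + (0 - Psi x \<omega>) * exp (- lam * x)
        + lam * (exp (- lam * x) * Mt x \<omega>) + 0) (at x within {0..p})"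
      unfolding D_def by (intro DERIV_add DERIV_mult DERIV_cmult E' DERIV_diff DERIV_const I' K')
    moreover have "(- lam * exp (- lam * x)) * (- Phi 0 \<omega> - I x) + (0 - Psi x \<omega>) * exp (- lam * x)
        + lam * (exp (- lam * x) * Mt x \<omega>) + 0 = 0"
      using eqs[of x] x unfolding Mt_def I_def by (simp add: algebra_simps)
    ultimately show ?thesis by simp
  qed
  obtain c where c: "\<forall>x\<in>{0..p}. D x = c"
    using has_field_derivative_zero_constant[OF convex_real_interval(5) der] by blast
  have "D 0 = 0" unfolding D_def I_def Kt_def by simp
  then have "D p = 0" using c p by auto
  then show ?thesis using Deq[of p] by simp
qed

end

context spctx begin

definition "cc T n j = T * real j / real (Suc n)"
definition "JJ T n \<omega> = nat \<lceil>rho T \<omega> * real (Suc n) / T\<rceil>"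
definition "sig T n \<omega> = cc T n (JJ T n \<omega>)"

lemma le_cc_iff: "0 < T \<Longrightarrow> rho T \<omega> * real (Suc n) / T \<le> real j \<longleftrightarrow> rho T \<omega> \<le> cc T n j"
  unfolding cc_def by (simp add: field_simps)

lemma JJ_iff:
  assumes w: "\<omega> \<in> space M" and T: "0 < T"
  shows "JJ T n \<omega> = j \<longleftrightarrow> rho T \<omega> \<le> cc T n j \<and> (j = 0 \<or> \<not> rho T \<omega> \<le> cc T n (j - 1))"
proof -
  define x where "x = rho T \<omega> * real (Suc n) / T"
  have x0: "0 \<le> x" unfolding x_def using rho_nonneg[OF w, of T] T by simp
  have a: "x \<le> real j \<longleftrightarrow> rho T \<omega> \<le> cc T n j" unfolding x_def by (rule le_cc_iff[OF T])
  have b: "x \<le> real (j - 1) \<longleftrightarrow> rho T \<omega> \<le> cc T n (j - 1)" unfolding x_def by (rule le_cc_iff[OF T])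
  show ?thesis
  proof (cases "j = 0")
    case True
    have "JJ T n \<omega> = 0 \<longleftrightarrow> x \<le> 0" unfolding JJ_def x_def[symmetric] by simp
    then show ?thesis using a True by simp
  next
    case False
    have "JJ T n \<omega> = j \<longleftrightarrow> \<lceil>x\<rceil> = int j" unfolding JJ_def x_def[symmetric] using False by auto
    also have "\<dots> \<longleftrightarrow> real j - 1 < x \<and> x \<le> real j" by (simp add: ceiling_eq_iff)
    also have "real j - 1 = real (j - 1)" using False by simp
    finally show ?thesis using a b False by auto
  qed
qed

lemma sig_props:
  assumes w: "\<omega> \<in> space M" and T: "0 < T"
  shows "JJ T n \<omega> \<le> Suc n" "rho T \<omega> \<le> sig T n \<omega>" "sig T n \<omega> \<le> rho T \<omega> + T / real (Suc n)"
    "sig T n \<omega> \<le> T" "0 \<le> sig T n \<omega>"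
proof -
  define x where "x = rho T \<omega> * real (Suc n) / T"
  have x0: "0 \<le> x" unfolding x_def using rho_nonneg[OF w, of T] T by simp
  have "rho T \<omega> * real (Suc n) \<le> T * real (Suc n)" using rho_le[of T \<omega>] by (intro mult_right_mono) auto
  then have xle: "x \<le> real (Suc n)" using T unfolding x_def by (simp add: divide_le_eq mult.commute)
  have J: "real (JJ T n \<omega>) = of_int \<lceil>x\<rceil>" unfolding JJ_def x_def[symmetric] using x0 by simp
  have c1: "x \<le> of_int \<lceil>x\<rceil>" "of_int \<lceil>x\<rceil> < x + 1" using ceiling_correct[of x] by auto
  have "\<lceil>x\<rceil> \<le> int (Suc n)" unfolding ceiling_le_iff using xle by simp
  then show "JJ T n \<omega> \<le> Suc n" unfolding JJ_def x_def[symmetric] nat_le_iff .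
  then have "real (JJ T n \<omega>) \<le> real (Suc n)" by simp
  then have "T * real (JJ T n \<omega>) \<le> T * real (Suc n)" using T by (intro mult_left_mono) auto
  then show "sig T n \<omega> \<le> T" unfolding sig_def cc_def by (simp add: divide_le_eq)
  show "0 \<le> sig T n \<omega>" unfolding sig_def cc_def using T by simp
  have rx: "rho T \<omega> = T * x / real (Suc n)" unfolding x_def using T by simp
  also have "\<dots> \<le> T * real (JJ T n \<omega>) / real (Suc n)" using J c1 T by (intro divide_right_mono mult_left_mono) auto
  finally show "rho T \<omega> \<le> sig T n \<omega>" unfolding sig_def cc_def .
  have "sig T n \<omega> = T * real (JJ T n \<omega>) / real (Suc n)" unfolding sig_def cc_def ..
  also have "\<dots> \<le> T * (x + 1) / real (Suc n)" using J c1 T by (intro divide_right_mono mult_left_mono) auto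
  also have "\<dots> = T * x / real (Suc n) + T / real (Suc n)" by (simp add: distrib_left add_divide_distrib)
  also have "\<dots> = rho T \<omega> + T / real (Suc n)" using rx by simp
  finally show "sig T n \<omega> \<le> rho T \<omega> + T / real (Suc n)" .
qed

lemma E_sets:
  assumes T: "0 < T"
  shows "{\<omega> \<in> space M. JJ T n \<omega> = j} \<in> sets (F (cc T n j))"
proof -
  have cj: "0 \<le> cc T n j" unfolding cc_def using T by simp
  have cj1: "cc T n (j - 1) \<le> cc T n j" "0 \<le> cc T n (j - 1)" unfolding cc_def using T
    by (auto simp: divide_right_mono mult_left_mono)
  have eq0: "{\<omega> \<in> space M. JJ T n \<omega> = j} = {\<omega> \<in> space M. rho T \<omega> \<le> cc T n j \<and> (j = 0 \<or> \<not> rho T \<omega> \<le> cc T n (j - 1))}"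
  proof (rule Collect_cong)
    fix \<omega> show "(\<omega> \<in> space M \<and> JJ T n \<omega> = j) = (\<omega> \<in> space M \<and> rho T \<omega> \<le> cc T n j \<and> (j = 0 \<or> \<not> rho T \<omega> \<le> cc T n (j - 1)))"
    proof (cases "\<omega> \<in> space M")
      case True
      show ?thesis using JJ_iff[OF True T, of n j] True by simp
    qed simp
  qed
  have A1: "{\<omega> \<in> space M. rho T \<omega> \<le> cc T n j} \<in> sets (F (cc T n j))" by (rule rho_event[OF cj])
  have A2: "{\<omega> \<in> space M. rho T \<omega> \<le> cc T n (j - 1)} \<in> sets (F (cc T n j))"
    using rho_event[OF cj1(2), of T] monoF[OF cj1(1)] by blast
  show ?thesis
  proof (cases "j = 0")
    case True
    then have "{\<omega> \<in> space M. JJ T n \<omega> = j} = {\<omega> \<in> space M. rho T \<omega> \<le> cc T n j}" unfolding eq0 by simp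
    then show ?thesis using A1 by simp
  next
    case False
    then have "{\<omega> \<in> space M. JJ T n \<omega> = j} = {\<omega> \<in> space M. rho T \<omega> \<le> cc T n j} - {\<omega> \<in> space M. rho T \<omega> \<le> cc T n (j - 1)}"
      unfolding eq0 by blast
    then show ?thesis using A1 A2 by (simp add: sets.Diff)
  qed
qed

lemma Zt0: "Zt 0 \<omega> = 0" unfolding Zt_def Mt_def Kt_def by simp

lemma cc_le: "0 < T \<Longrightarrow> j \<le> Suc n \<Longrightarrow> cc T n j \<le> T" "0 < T \<Longrightarrow> 0 \<le> cc T n j"
proof -
  assume T: "0 < T"
  show "0 \<le> cc T n j" unfolding cc_def using T by simp
  assume j: "j \<le> Suc n"
  have "T * real j \<le> T * real (Suc n)" using T j by (intro mult_left_mono) auto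
  then show "cc T n j \<le> T" unfolding cc_def by (simp add: divide_le_eq)
qed

lemma opt_stop:
  assumes T: "0 < T"
  shows "(\<integral>\<omega>. Zt (sig T n \<omega>) \<omega> \<partial>M) = 0"
proof -
  define E where "E j = {\<omega> \<in> space M. JJ T n \<omega> = j}" for j
  have EF: "E j \<in> sets (F (cc T n j))" for j unfolding E_def by (rule E_sets[OF T])
  have EM: "E j \<in> sets M" for j using EF subF by blast
  have ind: "indicator (E j) \<omega> = (if j = JJ T n \<omega> then 1 else (0::real))" if "\<omega> \<in> space M" for j \<omega>
    using that unfolding E_def by (auto simp: indicator_def)
  have pw: "Zt (sig T n \<omega>) \<omega> = (\<Sum>j\<in>{..Suc n}. indicator (E j) \<omega> * Zt (cc T n j) \<omega>)" if w: "\<omega> \<in> space M" for \<omega>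
  proof -
    have "(\<Sum>j\<in>{..Suc n}. indicator (E j) \<omega> * Zt (cc T n j) \<omega>) = (\<Sum>j\<in>{..Suc n}. if j = JJ T n \<omega> then Zt (cc T n j) \<omega> else 0)"
      by (rule sum.cong) (simp_all add: ind[OF w])
    also have "\<dots> = Zt (cc T n (JJ T n \<omega>)) \<omega>" using sig_props(1)[OF w T, of n] by (simp add: sum.delta')
    finally show ?thesis unfolding sig_def by simp
  qed
  have sum1: "(\<Sum>j\<in>{..Suc n}. indicator (E j) \<omega> * Zt T \<omega>) = Zt T \<omega>" if w: "\<omega> \<in> space M" for \<omega>
  proof -
    have "(\<Sum>j\<in>{..Suc n}. indicator (E j) \<omega> * Zt T \<omega>) = (\<Sum>j\<in>{..Suc n}. if j = JJ T n \<omega> then Zt T \<omega> else 0)"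
      by (rule sum.cong) (simp_all add: ind[OF w])
    also have "\<dots> = Zt T \<omega>" using sig_props(1)[OF w T, of n] by (simp add: sum.delta')
    finally show ?thesis .
  qed
  have intj: "integrable M (\<lambda>\<omega>. indicator (E j) \<omega> * Zt t \<omega>)" if "0 \<le> t" for j t
  proof (rule bnd_integrable[where C="ZB t"])
    show "(\<lambda>\<omega>. indicator (E j) \<omega> * Zt t \<omega>) \<in> borel_measurable M"
      using EM Zt_meas[OF that] by measurable
    fix \<omega> assume "\<omega> \<in> space M"
    then have "\<bar>Zt t \<omega>\<bar> \<le> ZB t" using Zt_bnd that by auto
    then show "\<bar>indicator (E j) \<omega> * Zt t \<omega>\<bar> \<le> ZB t" by (auto simp: indicator_def)
  qed
  have "(\<integral>\<omega>. Zt (sig T n \<omega>) \<omega> \<partial>M) = (\<integral>\<omega>. (\<Sum>j\<in>{..Suc n}. indicator (E j) \<omega> * Zt (cc T n j) \<omega>) \<partial>M)"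
    by (rule Bochner_Integration.integral_cong) (simp_all add: pw)
  also have "\<dots> = (\<Sum>j\<in>{..Suc n}. (\<integral>\<omega>. indicator (E j) \<omega> * Zt (cc T n j) \<omega> \<partial>M))"
    by (rule Bochner_Integration.integral_sum) (use intj cc_le(2)[OF T] in auto)
  also have "\<dots> = (\<Sum>j\<in>{..Suc n}. (\<integral>\<omega>. indicator (E j) \<omega> * Zt T \<omega> \<partial>M))"
  proof (rule sum.cong)
    fix j assume "j \<in> {..Suc n}"
    then show "(\<integral>\<omega>. indicator (E j) \<omega> * Zt (cc T n j) \<omega> \<partial>M) = (\<integral>\<omega>. indicator (E j) \<omega> * Zt T \<omega> \<partial>M)"
      using cc_le[OF T] EF by (intro Zt_mart[symmetric]) auto
  qed simp
  also have "\<dots> = (\<integral>\<omega>. (\<Sum>j\<in>{..Suc n}. indicator (E j) \<omega> * Zt T \<omega>) \<partial>M)"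
    by (rule Bochner_Integration.integral_sum[symmetric]) (use intj T in auto)
  also have "\<dots> = (\<integral>\<omega>. indicator (space M) \<omega> * Zt T \<omega> \<partial>M)"
  proof (rule Bochner_Integration.integral_cong)
    fix \<omega> assume w: "\<omega> \<in> space M"
    show "(\<Sum>j\<in>{..Suc n}. indicator (E j) \<omega> * Zt T \<omega>) = indicator (space M) \<omega> * Zt T \<omega>"
      unfolding sum1[OF w] using w by simp
  qed simp
  also have "\<dots> = (\<integral>\<omega>. indicator (space M) \<omega> * Zt 0 \<omega> \<partial>M)"
  proof (rule Zt_mart)
    show "space M \<in> sets (F 0)" using sets.top[of "F 0"] spF by simp
  qed (use T in auto)
  also have "\<dots> = 0" by (simp add: Zt0)
  finally show ?thesis .
qed

lemma sig_meas:
  assumes T: "0 < T"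
  shows "(\<lambda>\<omega>. Zt (sig T n \<omega>) \<omega>) \<in> borel_measurable M"
proof -
  define E where "E j = {\<omega> \<in> space M. JJ T n \<omega> = j}" for j
  have EM: "E j \<in> sets M" for j using E_sets[OF T] subF unfolding E_def by blast
  have ind: "indicator (E j) \<omega> = (if j = JJ T n \<omega> then 1 else (0::real))" if "\<omega> \<in> space M" for j \<omega>
    using that unfolding E_def by (auto simp: indicator_def)
  have pw: "(\<Sum>j\<in>{..Suc n}. indicator (E j) \<omega> * Zt (cc T n j) \<omega>) = Zt (sig T n \<omega>) \<omega>" if w: "\<omega> \<in> space M" for \<omega>
  proof -
    have "(\<Sum>j\<in>{..Suc n}. indicator (E j) \<omega> * Zt (cc T n j) \<omega>) = (\<Sum>j\<in>{..Suc n}. if j = JJ T n \<omega> then Zt (cc T n j) \<omega> else 0)"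
      by (rule sum.cong) (simp_all add: ind[OF w])
    also have "\<dots> = Zt (cc T n (JJ T n \<omega>)) \<omega>" using sig_props(1)[OF w T, of n] by (simp add: sum.delta')
    finally show ?thesis unfolding sig_def by simp
  qed
  have "(\<lambda>\<omega>. \<Sum>j\<in>{..Suc n}. indicator (E j) \<omega> * Zt (cc T n j) \<omega>) \<in> borel_measurable M"
  proof (intro borel_measurable_sum borel_measurable_times borel_measurable_indicator EM)
    fix j show "Zt (cc T n j) \<in> borel_measurable M" using cc_le(2)[OF T] by (intro Zt_meas) auto
  qed
  then show ?thesis by (rule measurable_cong[THEN iffD1, rotated]) (erule pw)
qed

lemma stop_T:
  assumes T: "0 < T"
  shows "(\<lambda>\<omega>. Zt (rho T \<omega>) \<omega>) \<in> borel_measurable M" and "(\<integral>\<omega>. Zt (rho T \<omega>) \<omega> \<partial>M) = 0"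
proof -
  have conv: "(\<lambda>n. Zt (sig T n \<omega>) \<omega>) \<longlonglongrightarrow> Zt (rho T \<omega>) \<omega>" if w: "\<omega> \<in> space M" for \<omega>
  proof -
    have "(\<lambda>n. rho T \<omega> + T * inverse (real (Suc n))) \<longlonglongrightarrow> rho T \<omega> + T * 0"
      by (intro tendsto_add tendsto_mult tendsto_const LIMSEQ_inverse_real_of_nat)
    then have up: "(\<lambda>n. rho T \<omega> + T / real (Suc n)) \<longlonglongrightarrow> rho T \<omega>" by (simp add: divide_inverse)
    have sconv: "(\<lambda>n. sig T n \<omega>) \<longlonglongrightarrow> rho T \<omega>"
    proof (rule tendsto_sandwich[OF _ _ tendsto_const up])
      show "\<forall>\<^sub>F n in sequentially. rho T \<omega> \<le> sig T n \<omega>" using sig_props(2)[OF w T] by simp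
      show "\<forall>\<^sub>F n in sequentially. sig T n \<omega> \<le> rho T \<omega> + T / real (Suc n)" using sig_props(3)[OF w T] by simp
    qed
    show ?thesis
    proof (rule continuous_on_tendsto_compose[OF Zt_cont[OF w] sconv])
      show "rho T \<omega> \<in> {0..T}" using rho_nonneg[OF w, of T] rho_le[of T \<omega>] T by auto
      show "\<forall>\<^sub>F n in sequentially. sig T n \<omega> \<in> {0..T}" using sig_props(4,5)[OF w T] by simp
    qed
  qed
  show meas: "(\<lambda>\<omega>. Zt (rho T \<omega>) \<omega>) \<in> borel_measurable M"
    by (rule borel_measurable_LIMSEQ_real[OF conv sig_meas[OF T]])
  have lim: "(\<lambda>n. \<integral>\<omega>. Zt (sig T n \<omega>) \<omega> \<partial>M) \<longlonglongrightarrow> (\<integral>\<omega>. Zt (rho T \<omega>) \<omega> \<partial>M)"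
  proof (rule integral_dominated_convergence[where w="\<lambda>_. ZB T"])
    show "(\<lambda>\<omega>. Zt (rho T \<omega>) \<omega>) \<in> borel_measurable M" by (rule meas)
    show "(\<lambda>\<omega>. Zt (sig T n \<omega>) \<omega>) \<in> borel_measurable M" for n by (rule sig_meas[OF T])
    show "integrable M (\<lambda>_. ZB T)" by (rule finite_measure.integrable_const[OF prob_space.finite_measure[OF P]])
    show "AE \<omega> in M. (\<lambda>n. Zt (sig T n \<omega>) \<omega>) \<longlonglongrightarrow> Zt (rho T \<omega>) \<omega>" using conv by (intro AE_I2)
    show "AE \<omega> in M. norm (Zt (sig T n \<omega>) \<omega>) \<le> ZB T" for n
    proof (rule AE_I2)
      fix \<omega> assume w: "\<omega> \<in> space M"
      show "norm (Zt (sig T n \<omega>) \<omega>) \<le> ZB T" using Zt_bnd[OF w sig_props(5)[OF w T] sig_props(4)[OF w T]] by simp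
    qed
  qed
  then have "(\<lambda>n. 0) \<longlonglongrightarrow> (\<integral>\<omega>. Zt (rho T \<omega>) \<omega> \<partial>M)" using opt_stop[OF T] by simp
  then show "(\<integral>\<omega>. Zt (rho T \<omega>) \<omega> \<partial>M) = 0" using LIMSEQ_const_iff by metis
qed

end

context spctx begin

definition "gm m \<omega> = exp (- lam * rho (real (Suc m)) \<omega>) * Phi (rho (real (Suc m)) \<omega>) \<omega>"

lemma gm_eq: "\<omega> \<in> space M \<Longrightarrow> gm m \<omega> = Zt (rho (real (Suc m)) \<omega>) \<omega> + tfa N L kk"
proof -
  assume w: "\<omega> \<in> space M"
  let ?T = "real (Suc m)"
  have p: "0 \<le> rho ?T \<omega>" by (rule rho_nonneg[OF w]) simp
  have "Zt (rho ?T \<omega>) \<omega> = exp (- lam * rho ?T \<omega>) * Phi (rho ?T \<omega>) \<omega> - Phi 0 \<omega>"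
    by (rule Zt_stop[OF w p]) (rule Psi_eq[OF w], auto)
  then show ?thesis unfolding gm_def Phi0[OF w] by simp
qed

lemma gm_meas: "gm m \<in> borel_measurable M"
proof -
  have "(\<lambda>\<omega>. Zt (rho (real (Suc m)) \<omega>) \<omega> + tfa N L kk) \<in> borel_measurable M"
    using stop_T(1)[of "real (Suc m)"] by simp
  then show ?thesis by (rule measurable_cong[THEN iffD1, rotated]) (simp add: gm_eq)
qed

lemma gm_int: "(\<integral>\<omega>. gm m \<omega> \<partial>M) = tfa N L kk"
proof -
  let ?T = "real (Suc m)"
  have iZ: "integrable M (\<lambda>\<omega>. Zt (rho ?T \<omega>) \<omega>)"
  proof (rule bnd_integrable[where C="ZB ?T"])
    show "(\<lambda>\<omega>. Zt (rho ?T \<omega>) \<omega>) \<in> borel_measurable M" by (rule stop_T(1)) simp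
    fix \<omega> assume w: "\<omega> \<in> space M"
    show "\<bar>Zt (rho ?T \<omega>) \<omega>\<bar> \<le> ZB ?T" by (rule Zt_bnd[OF w rho_nonneg[OF w] rho_le]) simp
  qed
  have "(\<integral>\<omega>. gm m \<omega> \<partial>M) = (\<integral>\<omega>. Zt (rho ?T \<omega>) \<omega> + tfa N L kk \<partial>M)"
    by (rule Bochner_Integration.integral_cong) (simp_all add: gm_eq)
  also have "\<dots> = (\<integral>\<omega>. Zt (rho ?T \<omega>) \<omega> \<partial>M) + (\<integral>\<omega>. tfa N L kk \<partial>M)"
    by (rule Bochner_Integration.integral_add[OF iZ]) (rule finite_measure.integrable_const[OF prob_space.finite_measure[OF P]])
  also have "\<dots> = tfa N L kk" using stop_T(2)[of ?T] prob_space.prob_space[OF P] by simp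
  finally show ?thesis .
qed

lemma gm_bnd: "\<omega> \<in> space M \<Longrightarrow> \<bar>gm m \<omega>\<bar> \<le> BB"
proof -
  assume w: "\<omega> \<in> space M"
  let ?r = "rho (real (Suc m)) \<omega>"
  have p: "0 \<le> ?r" by (rule rho_nonneg[OF w]) simp
  have e: "exp (- lam * ?r) \<le> 1" using p lam by simp
  have "\<bar>gm m \<omega>\<bar> = exp (- lam * ?r) * \<bar>Phi ?r \<omega>\<bar>" unfolding gm_def by (simp add: abs_mult)
  also have "\<dots> \<le> 1 * \<bar>Phi ?r \<omega>\<bar>" using e by (intro mult_right_mono) auto
  also have "\<dots> \<le> BB" using Phi_bnd[OF w p] by simp
  finally show ?thesis .
qed

lemma gm_conv: "\<omega> \<in> space M \<Longrightarrow> (\<lambda>m. gm m \<omega>) \<longlonglongrightarrow> exp_hit lam N L X \<omega>"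
proof -
  assume w: "\<omega> \<in> space M"
  show ?thesis
  proof (cases "hit_set N L X \<omega> = {}")
    case True
    then have eh: "exp_hit lam N L X \<omega> = 0" by (simp add: exp_hit_def)
    have r: "rho (real (Suc m)) \<omega> = real (Suc m)" for m using True by (simp add: rho_def)
    have "(\<lambda>m. exp (- lam) ^ Suc m * BB) \<longlonglongrightarrow> 0 * BB"
      using lam by (intro tendsto_mult tendsto_const LIMSEQ_power_zero[THEN LIMSEQ_Suc]) simp
    then have lim0: "(\<lambda>m. exp (- lam) ^ Suc m * BB) \<longlonglongrightarrow> 0" by simp
    have "(\<lambda>m. gm m \<omega>) \<longlonglongrightarrow> 0"
    proof (rule Lim_null_comparison[OF _ lim0])
      show "\<forall>\<^sub>F m in sequentially. norm (gm m \<omega>) \<le> exp (- lam) ^ Suc m * BB"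
      proof (rule always_eventually, rule allI)
        fix m
        have "exp (- lam * real (Suc m)) = exp (- lam) ^ Suc m"
          using exp_of_nat_mult[of "Suc m" "- lam"] by (simp add: mult.commute)
        moreover have "\<bar>Phi (real (Suc m)) \<omega>\<bar> \<le> BB" using Phi_bnd[OF w] by simp
        ultimately show "norm (gm m \<omega>) \<le> exp (- lam) ^ Suc m * BB"
          unfolding gm_def r by (simp add: abs_mult mult_left_mono)
      qed
    qed
    then show ?thesis using eh by simp
  next
    case False
    define tau where "tau = hit_time N L X \<omega>"
    have eh: "exp_hit lam N L X \<omega> = exp (- lam * tau)" using False by (simp add: exp_hit_def tau_def)
    obtain K where K: "tau < real K" using reals_Archimedean2 by blast
    have "\<forall>\<^sub>F m in sequentially. gm m \<omega> = exp (- lam * tau)"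
    proof (rule eventually_sequentiallyI[of K])
      fix m assume "K \<le> m"
      then have "tau \<le> real (Suc m)" using K by linarith
      then have "rho (real (Suc m)) \<omega> = tau" using False unfolding rho_def tau_def by simp
      then show "gm m \<omega> = exp (- lam * tau)" unfolding gm_def using Phi_hit[OF w False] tau_def by simp
    qed
    then show ?thesis unfolding eh by (rule tendsto_eventually)
  qed
qed

lemma main_result: "(\<integral>\<omega>. exp_hit lam N L X \<omega> \<partial>M) = tfa N L kk"
proof -
  have meas: "exp_hit lam N L X \<in> borel_measurable M"
    by (rule borel_measurable_LIMSEQ_real[OF gm_conv gm_meas])
  have "(\<lambda>m. \<integral>\<omega>. gm m \<omega> \<partial>M) \<longlonglongrightarrow> (\<integral>\<omega>. exp_hit lam N L X \<omega> \<partial>M)"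
  proof (rule integral_dominated_convergence[where w="\<lambda>_. BB"])
    show "exp_hit lam N L X \<in> borel_measurable M" by (rule meas)
    show "gm m \<in> borel_measurable M" for m by (rule gm_meas)
    show "integrable M (\<lambda>_. BB)" by (rule finite_measure.integrable_const[OF prob_space.finite_measure[OF P]])
    show "AE \<omega> in M. (\<lambda>m. gm m \<omega>) \<longlonglongrightarrow> exp_hit lam N L X \<omega>" using gm_conv by (intro AE_I2)
    show "AE \<omega> in M. norm (gm m \<omega>) \<le> BB" for m using gm_bnd by (intro AE_I2) simp
  qed
  then have "(\<lambda>m. tfa N L kk) \<longlonglongrightarrow> (\<integral>\<omega>. exp_hit lam N L X \<omega> \<partial>M)" by (simp add: gm_int)
  then show ?thesis using LIMSEQ_const_iff by metis
qed

end

theorem theorem2p3: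
  fixes N :: nat and M :: "'a measure" and F :: "real \<Rightarrow> 'a measure"
    and X :: "real \<Rightarrow> 'a \<Rightarrow> nat \<times> real" and L :: "nat \<Rightarrow> real" and lam :: real
  assumes "N \<ge> 2"
    and "spider_BM N M F X"
    and "\<forall>i<N. L i > 0"
    and "lam > 0"
  shows "(\<integral>\<omega>. exp_hit lam N L X \<omega> \<partial>M) =
     (\<Sum>i<N. sqrt (2 * lam) / sinh (sqrt (2 * lam) * L i)) /
     (\<Sum>i<N. sqrt (2 * lam) * cosh (sqrt (2 * lam) * L i) / sinh (sqrt (2 * lam) * L i))"
proof -
  interpret spctx N M F X L lam using assms by unfold_locales
  define k where "k = sqrt (2 * lam)"
  have k: "k \<noteq> 0" using assms(4) by (simp add: k_def)
  have kk: "kk = k" by (simp add: kk_def k_def)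
  have s1: "(\<Sum>i<N. k / sinh (k * L i)) = k * (\<Sum>i<N. 1 / sinh (k * L i))"
    by (simp add: sum_distrib_left)
  have s2: "(\<Sum>i<N. k * cosh (k * L i) / sinh (k * L i)) = k * (\<Sum>i<N. cosh (k * L i) / sinh (k * L i))"
    by (simp add: sum_distrib_left)
  have "(\<integral>\<omega>. exp_hit lam N L X \<omega> \<partial>M) = tfa N L k" using main_result kk by simp
  also have "\<dots> = (k * (\<Sum>i<N. 1 / sinh (k * L i))) / (k * (\<Sum>i<N. cosh (k * L i) / sinh (k * L i)))"
    unfolding tfa_def using k by simp
  finally show ?thesis unfolding k_def[symmetric] s1 s2 .
qed

end
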